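(* Consider the setting described in the context. For every $k\in\mathcal{K}=\{0,1,\dots,N\}$, the conditional mean $\mathbb{E}[x_k\mid \mathcal{I}^e_k]$ is the minimum mean-square-error estimator of $x_k$ given $\mathcal{I}^e_k$, and it satisfies $$\mathbb{E}[x_k\mid \mathcal{I}^e_k]=A^{\zeta_k}x_{k-\zeta_k}+\sum_{t=1}^{\zeta_k}A^{t-1}Bu_{k-t}.$$
   Context: Let $n,m\ge 1$, $N\in\mathbb{N}$, and $\mathcal{K}=\{0,1,\dots,N\}$. A process evolves as $x_{k+1}=Ax_k+Bu_k+w_k$ with output $y_k=x_{k-\tau_k}$ for $k\in\mathcal{K}$, where $A\in\mathbb{R}^{n\times n}$, $B\in\mathbb{R}^{n\times m}$, $u_k\in\mathbb{R}^m$ is the control input chosen by a controller based on its information, $w_k\in\mathbb{R}^n$ is Gaussian white noise with zero mean and covariance $W\succ 0$, $x_0$ is Gaussian with mean $m_0$ and covariance $M_0$, and $\tau_k\in\mathbb{N}_0$ is a random processing delay with known distribution, with $\tau_0=0$; $x_0$, the $w_k$ and the $\tau_k$ are mutually independent. At each time an event trigger chooses $\delta_k\in\{0,1\}$; if $\delta_k=1$ the current freshest observation is transmitted and received by the controller at time $k+1$ (one-step delay), otherwise nothing is received. The age of information at the event trigger is $\zeta_0=0$ and, for $k\ge1$, $\zeta_k=\tau_k$ if $\tau_k<\zeta_{k-1}+1$ and $\zeta_k=\zeta_{k-1}+1$ otherwise (so $x_{k-\zeta_k}$ is the freshest observation available at the trigger). The age of information at the controller is $\eta_0=\infty$ and,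 for $k\ge1$, $\eta_k=\zeta_{k-1}+1$ if $\delta_{k-1}=1$ and $\eta_k=\eta_{k-1}+1$ otherwise. The information set of the event trigger is $\mathcal{I}^e_k=\{x_{t-\zeta_t},x_{t-\eta_t},\delta_s,u_s : 0\le t\le k,\ 0\le s<k\}$ and that of the controller is $\mathcal{I}^c_k=\{x_{t-\eta_t},\delta_s,u_s: 0\le t\le k,\ 0\le s<k\}$ (entries with infinite age are void). An admissible triggering policy is a family $\pi=\{\mathbb{P}(\delta_k\mid\mathcal{I}^e_k)\}_{k=0}^N$ of Borel measurable transition kernels. *)

theory Defs
  imports "HOL-Probability.Probability"
begin

(* Matrix power A^t (note: the ring instance on vec is componentwise, so we define it). *)
fun matpow :: "real^'n^'n \<Rightarrow> nat \<Rightarrow> real^'n^'n" where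
  "matpow A 0 = mat 1"
| "matpow A (Suc t) = A ** matpow A t"

definition psd_matrix :: "real^'n^'n \<Rightarrow> bool" where
  "psd_matrix S \<longleftrightarrow> transpose S = S \<and> (\<forall>c. 0 \<le> c \<bullet> (S *v c))"

definition pd_matrix :: "real^'n^'n \<Rightarrow> bool" where
  "pd_matrix S \<longleftrightarrow> transpose S = S \<and> (\<forall>c. c \<noteq> 0 \<longrightarrow> 0 < c \<bullet> (S *v c))"

definition normal_law :: "real \<Rightarrow> real \<Rightarrow> real measure" where
  "normal_law m v = (if v = 0 then return borel m else density lborel (normal_density m (sqrt v)))"

definition gaussian_vec :: "'a measure \<Rightarrow> ('a \<Rightarrow> real^'n) \<Rightarrow> real^'n \<Rightarrow> real^'n^'n \<Rightarrow> bool" where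
  "gaussian_vec M X mu S \<longleftrightarrow> psd_matrix S \<and> X \<in> borel_measurable M \<and>
     (\<forall>c. distr M borel (\<lambda>\<omega>. c \<bullet> X \<omega>) = normal_law (c \<bullet> mu) (c \<bullet> (S *v c)))"

fun aoi_e :: "(nat \<Rightarrow> nat) \<Rightarrow> nat \<Rightarrow> nat" where
  "aoi_e tau 0 = 0"
| "aoi_e tau (Suc k) = (if tau (Suc k) < aoi_e tau k + 1 then tau (Suc k) else aoi_e tau k + 1)"

(* age of information at the controller; None encodes infinity *)
fun aoi_c :: "(nat \<Rightarrow> nat) \<Rightarrow> (nat \<Rightarrow> bool) \<Rightarrow> nat \<Rightarrow> nat option" where
  "aoi_c tau d 0 = None"
| "aoi_c tau d (Suc k) = (if d k then Some (aoi_e tau k + 1) else map_option Suc (aoi_c tau d k))"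

definition gen_sets :: "'a measure \<Rightarrow> ('a \<Rightarrow> 'b) \<Rightarrow> 'b measure \<Rightarrow> 'a set set" where
  "gen_sets M f N = {f -` A \<inter> space M | A. A \<in> sets N}"

(* observation received by the controller at time t (void, encoded as 0, if the age is infinite) *)
definition ctrl_obs :: "(nat \<Rightarrow> 'a \<Rightarrow> real^'n) \<Rightarrow> (nat \<Rightarrow> 'a \<Rightarrow> nat) \<Rightarrow> (nat \<Rightarrow> 'a \<Rightarrow> bool) \<Rightarrow> nat \<Rightarrow> 'a \<Rightarrow> real^'n" where
  "ctrl_obs x tau \<delta> t \<omega> = (case aoi_c (\<lambda>s. tau s \<omega>) (\<lambda>s. \<delta> s \<omega>) t of None \<Rightarrow> 0 | Some e \<Rightarrow> x (t - e) \<omega>)"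

definition info_c :: "'a measure \<Rightarrow> (nat \<Rightarrow> 'a \<Rightarrow> real^'n) \<Rightarrow> (nat \<Rightarrow> 'a \<Rightarrow> nat) \<Rightarrow> (nat \<Rightarrow> 'a \<Rightarrow> bool)
     \<Rightarrow> (nat \<Rightarrow> 'a \<Rightarrow> real^'m) \<Rightarrow> nat \<Rightarrow> 'a measure" where
  "info_c M x tau \<delta> u k = sigma (space M)
     ((\<Union>t\<in>{..k}. gen_sets M (\<lambda>\<omega>. aoi_c (\<lambda>s. tau s \<omega>) (\<lambda>s. \<delta> s \<omega>) t) (count_space UNIV)
                 \<union> gen_sets M (ctrl_obs x tau \<delta> t) borel)
      \<union> (\<Union>s\<in>{..<k}. gen_sets M (\<delta> s) (count_space UNIV) \<union> gen_sets M (u s) borel))"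

definition info_e :: "'a measure \<Rightarrow> (nat \<Rightarrow> 'a \<Rightarrow> real^'n) \<Rightarrow> (nat \<Rightarrow> 'a \<Rightarrow> nat) \<Rightarrow> (nat \<Rightarrow> 'a \<Rightarrow> bool)
     \<Rightarrow> (nat \<Rightarrow> 'a \<Rightarrow> real^'m) \<Rightarrow> nat \<Rightarrow> 'a measure" where
  "info_e M x tau \<delta> u k = sigma (space M)
     ((\<Union>t\<in>{..k}. gen_sets M (\<lambda>\<omega>. aoi_e (\<lambda>s. tau s \<omega>) t) (count_space UNIV)
                 \<union> gen_sets M (\<lambda>\<omega>. x (t - aoi_e (\<lambda>s. tau s \<omega>) t) \<omega>) borel)
      \<union> sets (info_c M x tau \<delta> u k))"

(* sources of primitive randomness: initial state, noises, delays, trigger randomization *)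
datatype src = SX0 | SW nat | STau nat | SV nat

end

theory Submission
  imports Defs
begin

lemma nth_meas: "f \<in> borel_measurable S \<Longrightarrow> (\<lambda>\<omega>. f \<omega> $ j) \<in> borel_measurable S"
  using borel_measurable_continuous_on[of "\<lambda>v. v $ j" f S] continuous_on_component[OF continuous_on_id, of UNIV j]
  by simp

lemma normal_law_props:
  assumes v: "0 \<le> v"
  shows "integrable (normal_law m v) (\<lambda>y. y)" "integrable (normal_law m v) (\<lambda>y. y^2)"
    "(\<integral>y. y \<partial>normal_law m v) = m"
proof -
  have all: "integrable (normal_law m v) (\<lambda>y. y) \<and> integrable (normal_law m v) (\<lambda>y. y^2) \<and> (\<integral>y. y \<partial>normal_law m v) = m"
  proof (cases "v = 0")
    case True
    have nl: "normal_law m v = return borel m" using True by (simp add: normal_law_def)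
    have i: "integrable (return borel m) f" if "f \<in> borel_measurable borel" for f :: "real \<Rightarrow> real"
      unfolding integrable_iff_bounded using that by (simp add: nn_integral_return)
    show ?thesis unfolding nl by (simp add: i integral_return)
  next
    case False
    then have sp: "0 < sqrt v" using v by simp
    have nl: "normal_law m v = density lborel (normal_density m (sqrt v))" using False by (simp add: normal_law_def)
    have id: "integrable (density lborel (normal_density m (sqrt v))) f \<longleftrightarrow> integrable lborel (\<lambda>x. normal_density m (sqrt v) x * f x)"
      if "f \<in> borel_measurable borel" for f :: "real \<Rightarrow> real"
      using integrable_density[of f lborel "normal_density m (sqrt v)"] that by simp
    have i1: "integrable lborel (\<lambda>x. normal_density m (sqrt v) x * x)" by (rule integrable_normal_moment_nz_1[OF sp])
    have eq: "(\<lambda>y. normal_density m (sqrt v) y * y^2) = (\<lambda>y. normal_density m (sqrt v) y * (y - m)^2 + 2 * m * (normal_density m (sqrt v) y * y) - m^2 * normal_density m (sqrt v) y)"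
      by (rule ext) (simp add: power2_eq_square algebra_simps)
    have i2: "integrable lborel (\<lambda>x. normal_density m (sqrt v) x * x^2)"
      unfolding eq using integrable_normal_moment[OF sp, of m 2] i1 integrable_normal_density[OF sp, of m]
      by (intro Bochner_Integration.integrable_diff Bochner_Integration.integrable_add integrable_mult_right) auto
    have m: "(\<integral>y. y \<partial>normal_law m v) = m"
      unfolding nl using integral_density[of "\<lambda>y. y" lborel "normal_density m (sqrt v)"] integral_normal_moment_nz_1[OF sp, of m]
      by simp
    show ?thesis unfolding nl using id i1 i2 m unfolding nl by simp
  qed
  then show "integrable (normal_law m v) (\<lambda>y. y)" "integrable (normal_law m v) (\<lambda>y. y^2)"
    "(\<integral>y. y \<partial>normal_law m v) = m" by simp_all
qed

lemma axis_mv: "((S::real^'n^'n) *v axis j 1) $ i = S $ i $ j"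
  by (simp add: matrix_vector_mult_def axis_def if_distrib cong: if_cong)

lemma gauss_comp:
  assumes g: "gaussian_vec M X mu S"
  shows "distr M borel (\<lambda>\<omega>. X \<omega> $ j) = normal_law (mu $ j) (S $ j $ j)" "0 \<le> S $ j $ j"
proof -
  have "distr M borel (\<lambda>\<omega>. axis j 1 \<bullet> X \<omega>) = normal_law (axis j 1 \<bullet> mu) (axis j 1 \<bullet> (S *v axis j 1))"
    using g unfolding gaussian_vec_def by blast
  moreover have "\<And>y. axis j 1 \<bullet> y = y $ j" by (simp add: inner_axis')
  moreover have "0 \<le> axis j 1 \<bullet> (S *v axis j 1)" using g unfolding gaussian_vec_def psd_matrix_def by blast
  ultimately show "distr M borel (\<lambda>\<omega>. X \<omega> $ j) = normal_law (mu $ j) (S $ j $ j)" "0 \<le> S $ j $ j"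
    by (simp_all add: axis_mv)
qed

lemma gauss_int:
  assumes g: "gaussian_vec M X mu S"
  shows "integrable M (\<lambda>\<omega>. X \<omega> $ j)" "integrable M (\<lambda>\<omega>. (X \<omega> $ j)^2)" "(\<integral>\<omega>. X \<omega> $ j \<partial>M) = mu $ j"
proof -
  have Xm: "X \<in> borel_measurable M" using g unfolding gaussian_vec_def by blast
  then have Xj: "(\<lambda>\<omega>. X \<omega> $ j) \<in> borel_measurable M" by (rule nth_meas)
  note d = gauss_comp[OF g, of j]
  note p = normal_law_props[OF d(2), of "mu $ j", folded d(1)]
  show "integrable M (\<lambda>\<omega>. X \<omega> $ j)" using p(1) integrable_distr_eq[OF Xj, of "\<lambda>y. y"] by simp
  show "integrable M (\<lambda>\<omega>. (X \<omega> $ j)^2)" using p(2) integrable_distr_eq[OF Xj, of "\<lambda>y. y^2"] by simp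
  show "(\<integral>\<omega>. X \<omega> $ j \<partial>M) = mu $ j" using p(3) integral_distr[OF Xj, of "\<lambda>y. y"] by simp
qed

definition L2 :: "'a measure \<Rightarrow> ('a \<Rightarrow> real) \<Rightarrow> bool" where
  "L2 M f \<longleftrightarrow> f \<in> borel_measurable M \<and> integrable M (\<lambda>\<omega>. (f \<omega>)^2)"

lemma L2_add: assumes "L2 M f" "L2 M g" shows "L2 M (\<lambda>\<omega>. f \<omega> + g \<omega>)"
proof -
  have [measurable]: "f \<in> borel_measurable M" "g \<in> borel_measurable M" using assms by (auto simp: L2_def)
  have int: "integrable M (\<lambda>\<omega>. 2 * (f \<omega>)^2 + 2 * (g \<omega>)^2)" using assms by (auto simp: L2_def)
  have bd: "norm ((f \<omega> + g \<omega>)^2) \<le> norm (2 * (f \<omega>)^2 + 2 * (g \<omega>)^2)" for \<omega>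
  proof -
    have "0 \<le> (f \<omega> - g \<omega>)^2" by simp
    then have "(f \<omega> + g \<omega>)^2 \<le> 2 * (f \<omega>)^2 + 2 * (g \<omega>)^2" unfolding power2_diff power2_sum by linarith
    then show ?thesis by simp
  qed
  have "integrable M (\<lambda>\<omega>. (f \<omega> + g \<omega>)^2)"
    by (rule Bochner_Integration.integrable_bound[OF int]) (measurable, rule AE_I2, rule bd)
  then show ?thesis unfolding L2_def by simp
qed

lemma L2_cmult: assumes "L2 M f" shows "L2 M (\<lambda>\<omega>. a * f \<omega>)"
proof -
  have [measurable]: "f \<in> borel_measurable M" using assms by (auto simp: L2_def)
  have "integrable M (\<lambda>\<omega>. a^2 * (f \<omega>)^2)" using assms by (auto simp: L2_def)
  then show ?thesis unfolding L2_def by (simp add: power_mult_distrib)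
qed

lemma L2_zero: "L2 M (\<lambda>\<omega>. 0)"
  unfolding L2_def by simp

lemma L2_sum: "(\<And>i. i \<in> I \<Longrightarrow> L2 M (f i)) \<Longrightarrow> L2 M (\<lambda>\<omega>. \<Sum>i\<in>I. f i \<omega>)"
proof (induction I rule: infinite_finite_induct)
  case (infinite A) then show ?case by (simp add: L2_zero)
next
  case empty then show ?case by (simp add: L2_zero)
next
  case (insert a A) then show ?case using L2_add[of M "f a" "\<lambda>\<omega>. \<Sum>i\<in>A. f i \<omega>"] by simp
qed

lemma L2_prod_int: assumes "L2 M f" "L2 M g" shows "integrable M (\<lambda>\<omega>. f \<omega> * g \<omega>)"
proof -
  have [measurable]: "f \<in> borel_measurable M" "g \<in> borel_measurable M" using assms by (auto simp: L2_def)
  have int: "integrable M (\<lambda>\<omega>. (f \<omega>)^2 + (g \<omega>)^2)" using assms by (auto simp: L2_def)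
  have bd: "norm (f \<omega> * g \<omega>) \<le> norm ((f \<omega>)^2 + (g \<omega>)^2)" for \<omega>
  proof -
    have "0 \<le> (\<bar>f \<omega>\<bar> - \<bar>g \<omega>\<bar>)^2" by simp
    then have "2 * \<bar>f \<omega>\<bar> * \<bar>g \<omega>\<bar> \<le> (f \<omega>)^2 + (g \<omega>)^2" by (simp add: power2_eq_square algebra_simps)
    moreover have "\<bar>f \<omega>\<bar> * \<bar>g \<omega>\<bar> \<le> 2 * \<bar>f \<omega>\<bar> * \<bar>g \<omega>\<bar>" by simp
    moreover have "0 \<le> \<bar>f \<omega>\<bar> * \<bar>g \<omega>\<bar>" by simp
    ultimately have "\<bar>f \<omega>\<bar> * \<bar>g \<omega>\<bar> \<le> (f \<omega>)^2 + (g \<omega>)^2" by linarith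
    then show ?thesis by (simp add: abs_mult)
  qed
  show ?thesis by (rule Bochner_Integration.integrable_bound[OF int]) (measurable, rule AE_I2, rule bd)
qed

lemma L2_int: assumes "finite_measure M" "L2 M f" shows "integrable M f"
proof -
  interpret finite_measure M by fact
  have "L2 M (\<lambda>\<omega>. 1)" unfolding L2_def by simp
  from L2_prod_int[OF assms(2) this] show ?thesis by simp
qed

lemma L2_indicator: assumes "A \<in> sets M" "L2 M f" shows "L2 M (\<lambda>\<omega>. indicator A \<omega> * f \<omega>)"
proof -
  have [measurable]: "f \<in> borel_measurable M" using assms by (auto simp: L2_def)
  have "integrable M (\<lambda>\<omega>. indicator A \<omega> * (f \<omega>)^2)"
    using integrable_real_mult_indicator[of A M "\<lambda>\<omega>. (f \<omega>)^2"] assms by (auto simp: L2_def mult.commute)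
  moreover have "(\<lambda>\<omega>. (indicator A \<omega> * f \<omega>)^2) = (\<lambda>\<omega>. indicator A \<omega> * (f \<omega>)^2)"
    by (rule ext) (simp add: indicator_def)
  ultimately show ?thesis unfolding L2_def using assms(1) by simp
qed

lemma L2_diff: "L2 M f \<Longrightarrow> L2 M g \<Longrightarrow> L2 M (\<lambda>\<omega>. f \<omega> - g \<omega>)"
  using L2_add[of M f "\<lambda>\<omega>. (-1) * g \<omega>"] L2_cmult[of M g "-1"] by simp

lemma L2_cong: "(\<And>\<omega>. \<omega> \<in> space M \<Longrightarrow> f \<omega> = g \<omega>) \<Longrightarrow> L2 M f \<Longrightarrow> L2 M g"
  unfolding L2_def
proof (elim conjE, intro conjI)
  assume eq: "\<And>\<omega>. \<omega> \<in> space M \<Longrightarrow> f \<omega> = g \<omega>" and m: "f \<in> borel_measurable M" and i: "integrable M (\<lambda>\<omega>. (f \<omega>)\<^sup>2)"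
  show "g \<in> borel_measurable M" using m measurable_cong[of M f g] eq by simp
  show "integrable M (\<lambda>\<omega>. (g \<omega>)\<^sup>2)" using i Bochner_Integration.integrable_cong[where M=M and N=M and f="\<lambda>\<omega>. (f \<omega>)^2" and g="\<lambda>\<omega>. (g \<omega>)^2"] eq by simp
qed

lemma mmse_comp:
  assumes sfs: "sigma_finite_subalgebra M F"
    and f: "L2 M f" and phi: "L2 M \<phi>" "\<phi> \<in> borel_measurable F"
    and ae: "AE \<omega> in M. real_cond_exp M F f \<omega> = \<phi> \<omega>"
    and h: "h \<in> borel_measurable F"
  shows "(\<integral>\<^sup>+\<omega>. ennreal ((f \<omega> - real_cond_exp M F f \<omega>)^2) \<partial>M) \<le> (\<integral>\<^sup>+\<omega>. ennreal ((f \<omega> - h \<omega>)^2) \<partial>M)"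
proof -
  interpret sigma_finite_subalgebra M F by (rule sfs)
  have hM: "h \<in> borel_measurable M" by (rule measurable_from_subalg[OF subalg h])
  have phiM: "\<phi> \<in> borel_measurable M" using phi by (simp add: L2_def)
  have fM: "f \<in> borel_measurable M" using f by (simp add: L2_def)
  have lhs: "(\<integral>\<^sup>+\<omega>. ennreal ((f \<omega> - real_cond_exp M F f \<omega>)^2) \<partial>M) = (\<integral>\<^sup>+\<omega>. ennreal ((f \<omega> - \<phi> \<omega>)^2) \<partial>M)"
    by (rule nn_integral_cong_AE) (use ae in auto)
  show ?thesis
  proof (cases "(\<integral>\<^sup>+\<omega>. ennreal ((f \<omega> - h \<omega>)^2) \<partial>M) = \<infinity>")
    case True then show ?thesis by simp
  next
    case False
    have "integrable M (\<lambda>\<omega>. (f \<omega> - h \<omega>)^2)"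
      unfolding integrable_iff_bounded using False fM hM by (simp add: top.not_eq_extremum)
    then have Lfh: "L2 M (\<lambda>\<omega>. f \<omega> - h \<omega>)" unfolding L2_def using fM hM by simp
    have Lh: "L2 M h" using L2_diff[OF f Lfh] by simp
    define d where "d = (\<lambda>\<omega>. \<phi> \<omega> - h \<omega>)"
    have Ld: "L2 M d" unfolding d_def by (rule L2_diff[OF phi(1) Lh])
    have dF: "d \<in> borel_measurable F" unfolding d_def using phi(2) h by measurable
    have Lfp: "L2 M (\<lambda>\<omega>. f \<omega> - \<phi> \<omega>)" by (rule L2_diff[OF f phi(1)])
    have idf: "integrable M (\<lambda>\<omega>. d \<omega> * f \<omega>)" by (rule L2_prod_int[OF Ld f])
    have idp: "integrable M (\<lambda>\<omega>. d \<omega> * \<phi> \<omega>)" by (rule L2_prod_int[OF Ld phi(1)])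
    have "(\<integral>\<omega>. d \<omega> * real_cond_exp M F f \<omega> \<partial>M) = (\<integral>\<omega>. d \<omega> * f \<omega> \<partial>M)"
      by (rule real_cond_exp_intg(2)[OF idf dF fM])
    moreover have "(\<integral>\<omega>. d \<omega> * real_cond_exp M F f \<omega> \<partial>M) = (\<integral>\<omega>. d \<omega> * \<phi> \<omega> \<partial>M)"
      by (rule integral_cong_AE) (use ae dF measurable_from_subalg[OF subalg dF] phiM in auto)
    ultimately have orth: "(\<integral>\<omega>. d \<omega> * (f \<omega> - \<phi> \<omega>) \<partial>M) = 0"
      using idf idp by (simp add: right_diff_distrib)
    have i1: "integrable M (\<lambda>\<omega>. (f \<omega> - \<phi> \<omega>)^2)" using Lfp by (simp add: L2_def)
    have i2: "integrable M (\<lambda>\<omega>. d \<omega> * (f \<omega> - \<phi> \<omega>))" by (rule L2_prod_int[OF Ld Lfp])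
    have i3: "integrable M (\<lambda>\<omega>. (d \<omega>)^2)" using Ld by (simp add: L2_def)
    have eq: "(\<lambda>\<omega>. (f \<omega> - h \<omega>)^2) = (\<lambda>\<omega>. (f \<omega> - \<phi> \<omega>)^2 + 2 * (d \<omega> * (f \<omega> - \<phi> \<omega>)) + (d \<omega>)^2)"
      by (rule ext) (simp add: d_def power2_eq_square algebra_simps)
    have "(\<integral>\<omega>. (f \<omega> - h \<omega>)^2 \<partial>M) = (\<integral>\<omega>. (f \<omega> - \<phi> \<omega>)^2 \<partial>M) + 2 * (\<integral>\<omega>. d \<omega> * (f \<omega> - \<phi> \<omega>) \<partial>M) + (\<integral>\<omega>. (d \<omega>)^2 \<partial>M)"
      unfolding eq using i1 i2 i3 by simp
    also have "\<dots> \<ge> (\<integral>\<omega>. (f \<omega> - \<phi> \<omega>)^2 \<partial>M)" unfolding orth by simp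
    finally have le: "(\<integral>\<omega>. (f \<omega> - \<phi> \<omega>)^2 \<partial>M) \<le> (\<integral>\<omega>. (f \<omega> - h \<omega>)^2 \<partial>M)" .
    have n1: "(\<integral>\<^sup>+\<omega>. ennreal ((f \<omega> - \<phi> \<omega>)^2) \<partial>M) = ennreal (\<integral>\<omega>. (f \<omega> - \<phi> \<omega>)^2 \<partial>M)"
      by (rule nn_integral_eq_integral[OF i1]) simp
    have n2: "(\<integral>\<^sup>+\<omega>. ennreal ((f \<omega> - h \<omega>)^2) \<partial>M) = ennreal (\<integral>\<omega>. (f \<omega> - h \<omega>)^2 \<partial>M)"
      by (rule nn_integral_eq_integral) (use Lfh in \<open>simp_all add: L2_def\<close>)
    show ?thesis unfolding lhs n1 n2 using le by (rule ennreal_leI)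
  qed
qed

lemma aoi_e_le: "aoi_e tau k \<le> k"
  by (induction k) auto
lemma aoi_e_step: "k - aoi_e tau k \<le> Suc k - aoi_e tau (Suc k)"
  using aoi_e_le[of tau k] by auto
lemma aoi_e_mono: "r \<le> s \<Longrightarrow> r - aoi_e tau r \<le> s - aoi_e tau s"
proof (induction s rule: dec_induct)
  case (step n) then show ?case using aoi_e_step[of n tau] by linarith
qed simp
lemma aoi_c_some: "aoi_c tau d t = Some e \<Longrightarrow> \<exists>t'<t. t - e = t' - aoi_e tau t' \<and> e \<le> t"
proof (induction t arbitrary: e)
  case 0 then show ?case by simp
next
  case (Suc t)
  show ?case
  proof (cases "d t")
    case True
    then have "e = aoi_e tau t + 1" using Suc.prems by simp
    then show ?thesis using aoi_e_le[of tau t] by (intro exI[of _ t]) auto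
  next
    case False
    then obtain e' where e': "aoi_c tau d t = Some e'" "e = Suc e'" using Suc.prems by auto
    from Suc.IH[OF e'(1)] obtain t' where "t' < t" "t - e' = t' - aoi_e tau t'" "e' \<le> t" by blast
    then show ?thesis using e' by (intro exI[of _ t']) auto
  qed
qed
locale sys =

  fixes M :: "'a measure" and N :: nat
    and A :: "real^'n^'n" and B :: "real^'m^'n"
    and W M0 :: "real^'n^'n" and m0 :: "real^'n"
    and x :: "nat \<Rightarrow> 'a \<Rightarrow> real^'n" and w :: "nat \<Rightarrow> 'a \<Rightarrow> real^'n"
    and u :: "nat \<Rightarrow> 'a \<Rightarrow> real^'m" and tau :: "nat \<Rightarrow> 'a \<Rightarrow> nat"
    and \<delta> :: "nat \<Rightarrow> 'a \<Rightarrow> bool" and v :: "nat \<Rightarrow> 'a \<Rightarrow> real"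
  assumes prob: "prob_space M"
    and x0_gauss: "gaussian_vec M (x 0) m0 M0"
    and w_gauss: "\<And>k. k \<le> N \<Longrightarrow> gaussian_vec M (w k) 0 W"
    and W_pd: "pd_matrix W"
    and dyn: "\<And>k \<omega>. k < N \<Longrightarrow> \<omega> \<in> space M \<Longrightarrow> x (Suc k) \<omega> = A *v x k \<omega> + B *v u k \<omega> + w k \<omega>"
    and tau_meas: "\<And>k. k \<le> N \<Longrightarrow> tau k \<in> measurable M (count_space UNIV)"
    and tau0: "\<And>\<omega>. \<omega> \<in> space M \<Longrightarrow> tau 0 \<omega> = 0"
    and v_meas: "\<And>k. k \<le> N \<Longrightarrow> v k \<in> borel_measurable M"
    and indep: "prob_space.indep_sets M
        (\<lambda>i. case i of SX0 \<Rightarrow> gen_sets M (x 0) borel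
                     | SW k \<Rightarrow> gen_sets M (w k) borel
                     | STau k \<Rightarrow> gen_sets M (tau k) (count_space UNIV)
                     | SV k \<Rightarrow> gen_sets M (v k) borel)
        ({SX0} \<union> SW ` {..N} \<union> STau ` {..N} \<union> SV ` {..N})"
    and ctrl: "\<And>k. k \<le> N \<Longrightarrow> u k \<in> borel_measurable (info_c M x tau \<delta> u k)"
    and ctrl_L2: "\<And>k. k \<le> N \<Longrightarrow> integrable M (\<lambda>\<omega>. (norm (u k \<omega>))\<^sup>2)"
    and trig: "\<And>k. k \<le> N \<Longrightarrow> \<delta> k \<in> measurable
        (sigma (space M) (sets (info_e M x tau \<delta> u k) \<union> gen_sets M (v k) borel)) (count_space UNIV)"

begin

abbreviation "\<Omega> \<equiv> space M"

definition Eg :: "src \<Rightarrow> 'a set set" where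
  "Eg = (\<lambda>i. case i of SX0 \<Rightarrow> gen_sets M (x 0) borel
                     | SW k \<Rightarrow> gen_sets M (w k) borel
                     | STau k \<Rightarrow> gen_sets M (tau k) (count_space UNIV)
                     | SV k \<Rightarrow> gen_sets M (v k) borel)"

definition I1 :: "nat \<Rightarrow> src set" where
  "I1 c = {SX0} \<union> SW ` {..<c} \<union> STau ` {..N} \<union> SV ` {..N}"

definition Fc :: "nat \<Rightarrow> 'a measure" where
  "Fc c = sigma \<Omega> (\<Union>i\<in>I1 c. Eg i)"

definition zeta :: "nat \<Rightarrow> 'a \<Rightarrow> nat" where
  "zeta s \<omega> = aoi_e (\<lambda>r. tau r \<omega>) s"

definition Es :: "nat \<Rightarrow> nat \<Rightarrow> 'a set" where
  "Es s c = {\<omega> \<in> \<Omega>. s - zeta s \<omega> \<le> c}"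

definition Good :: "'a set \<Rightarrow> nat \<Rightarrow> 'a set set" where
  "Good E c = {S. S \<subseteq> \<Omega> \<and> S \<inter> E \<in> sets (Fc c)}"

lemma gen_sets_Pow: "gen_sets M f Y \<subseteq> Pow \<Omega>"
  unfolding gen_sets_def by auto

lemma Eg_Pow: "Eg i \<subseteq> Pow \<Omega>"
  unfolding Eg_def gen_sets_def by (auto split: src.splits)

lemma sets_Fc: "sets (Fc c) = sigma_sets \<Omega> (\<Union>i\<in>I1 c. Eg i)"
  unfolding Fc_def using Eg_Pow by (intro sets_measure_of) blast

lemma space_Fc[simp]: "space (Fc c) = \<Omega>"
  unfolding Fc_def by (simp add: space_measure_of_conv)

lemma Eg_Fc: "i \<in> I1 c \<Longrightarrow> Eg i \<subseteq> sets (Fc c)"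
  unfolding sets_Fc by auto

lemma meas_of_gen:
  assumes "gen_sets M f Y \<subseteq> sets S" "space S = \<Omega>" "f \<in> \<Omega> \<rightarrow> space Y"
  shows "f \<in> measurable S Y"
  using assms unfolding measurable_def gen_sets_def by auto

lemma gen_of_meas:
  assumes "f \<in> measurable S Y" "space S = \<Omega>"
  shows "gen_sets M f Y \<subseteq> sets S"
  using assms unfolding measurable_def gen_sets_def by auto

lemma x0_Fc: "x 0 \<in> borel_measurable (Fc c)"
  by (rule meas_of_gen) (use Eg_Fc[of SX0 c] in \<open>auto simp: I1_def Eg_def\<close>)

lemma w_Fc: "j < c \<Longrightarrow> w j \<in> borel_measurable (Fc c)"
  by (rule meas_of_gen) (use Eg_Fc[of "SW j" c] in \<open>auto simp: I1_def Eg_def\<close>)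

lemma tau_Fc: "r \<le> N \<Longrightarrow> tau r \<in> measurable (Fc c) (count_space UNIV)"
  by (rule meas_of_gen) (use Eg_Fc[of "STau r" c] in \<open>auto simp: I1_def Eg_def\<close>)

lemma v_Fc: "r \<le> N \<Longrightarrow> v r \<in> borel_measurable (Fc c)"
  by (rule meas_of_gen) (use Eg_Fc[of "SV r" c] in \<open>auto simp: I1_def Eg_def\<close>)

lemma x0_M: "x 0 \<in> borel_measurable M"
  using x0_gauss unfolding gaussian_vec_def by auto

lemma w_M: "j \<le> N \<Longrightarrow> w j \<in> borel_measurable M"
  using w_gauss unfolding gaussian_vec_def by auto

lemma Fc_sub_M: "c \<le> Suc N \<Longrightarrow> sets (Fc c) \<subseteq> sets M"
  unfolding sets_Fc
proof (rule sigma_algebra.sigma_sets_subset[OF sets.sigma_algebra_axioms], safe)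
  fix i S assume c: "c \<le> Suc N" and i: "i \<in> I1 c" and S: "S \<in> Eg i"
  show "S \<in> sets M"
  proof (cases i)
    case SX0 then show ?thesis using S gen_of_meas[OF x0_M] by (auto simp: Eg_def)
  next
    case (SW j) then have "j \<le> N" using i c by (auto simp: I1_def)
    then show ?thesis using S gen_of_meas[OF w_M] SW by (auto simp: Eg_def)
  next
    case (STau j) then have "j \<le> N" using i c by (auto simp: I1_def)
    then show ?thesis using S gen_of_meas[OF tau_meas] STau by (auto simp: Eg_def)
  next
    case (SV j) then have "j \<le> N" using i c by (auto simp: I1_def)
    then show ?thesis using S gen_of_meas[OF v_meas] SV by (auto simp: Eg_def)
  qed
qed

lemma nat_borel_count: "measurable S (borel::nat measure) = measurable S (count_space UNIV)"
  by (rule measurable_cong_sets) (auto simp: sets_borel_eq_count_space)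

lemma zeta_Fc: "s \<le> N \<Longrightarrow> zeta s \<in> measurable (Fc c) (count_space UNIV)"
proof (induction s)
  case 0 then show ?case by (simp add: zeta_def)
next
  case (Suc s)
  have m1: "zeta s \<in> borel_measurable (Fc c)" "tau (Suc s) \<in> borel_measurable (Fc c)"
    using Suc.IH[OF Suc_leD[OF Suc.prems]] tau_Fc[OF Suc.prems] by (simp_all add: nat_borel_count)
  have "(\<lambda>\<omega>. if tau (Suc s) \<omega> \<le> zeta s \<omega> then tau (Suc s) \<omega> else zeta s \<omega> + 1) \<in> borel_measurable (Fc c)"
    using m1 borel_measurable_le[OF m1(2) m1(1)] by (intro measurable_If borel_measurable_add) auto
  then have m: "(\<lambda>\<omega>. if tau (Suc s) \<omega> \<le> zeta s \<omega> then tau (Suc s) \<omega> else zeta s \<omega> + 1) \<in> measurable (Fc c) (count_space UNIV)"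
    by (simp add: nat_borel_count)
  have eq: "zeta (Suc s) = (\<lambda>\<omega>. if tau (Suc s) \<omega> \<le> zeta s \<omega> then tau (Suc s) \<omega> else zeta s \<omega> + 1)"
    by (auto simp: zeta_def)
  show ?case unfolding eq by (rule m)
qed

lemma zeta_le: "zeta s \<omega> \<le> s"
  unfolding zeta_def by (rule aoi_e_le)

lemma Es_Fc: "s \<le> N \<Longrightarrow> Es s c \<in> sets (Fc c)"
proof -
  assume "s \<le> N"
  note [measurable] = zeta_Fc[OF this]
  have "Es s c = {\<omega> \<in> space (Fc c). s - zeta s \<omega> \<le> c}" by (simp add: Es_def)
  also have "\<dots> \<in> sets (Fc c)" by measurable
  finally show ?thesis .
qed

lemma Es_all: "s \<le> c \<Longrightarrow> Es s c = \<Omega>"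
  unfolding Es_def by auto

lemma Es_mono: assumes "r \<le> s" shows "Es s c \<subseteq> Es r c"
proof
  fix \<omega> assume "\<omega> \<in> Es s c"
  then show "\<omega> \<in> Es r c" using assms unfolding Es_def zeta_def using aoi_e_mono[of r s "\<lambda>r. tau r \<omega>"] by auto
qed

lemma Good_sub: "S \<in> Good E c \<Longrightarrow> S \<subseteq> \<Omega>"
  unfolding Good_def mem_Collect_eq by (erule conjunct1)

lemma Good_sigma:
  assumes E: "E \<in> sets (Fc c)"
  shows "sigma_algebra \<Omega> (Good E c)"
  unfolding sigma_algebra_iff2
proof (intro conjI allI ballI impI)
  have EO: "E \<subseteq> \<Omega>" using sets.sets_into_space[OF E] unfolding space_Fc .
  show "Good E c \<subseteq> Pow \<Omega>" using Good_sub by blast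
  show "{} \<in> Good E c" unfolding Good_def mem_Collect_eq Int_empty_left by (intro conjI empty_subsetI sets.empty_sets)
  fix S assume "S \<in> Good E c"
  then have SE: "S \<inter> E \<in> sets (Fc c)" and "S \<subseteq> \<Omega>" unfolding Good_def by blast+
  have "(\<Omega> - S) \<inter> E = E - (S \<inter> E)" using EO by blast
  moreover have "E - (S \<inter> E) \<in> sets (Fc c)" using E SE by (rule sets.Diff)
  ultimately show "\<Omega> - S \<in> Good E c" unfolding Good_def mem_Collect_eq by (metis Diff_subset)
next
  fix F :: "nat \<Rightarrow> 'a set" assume "range F \<subseteq> Good E c"
  then have h: "\<And>i. F i \<inter> E \<in> sets (Fc c)" "\<And>i. F i \<subseteq> \<Omega>" unfolding Good_def by blast+
  have "range (\<lambda>i. F i \<inter> E) \<subseteq> sets (Fc c)" using h(1) by blast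
  then have "(\<Union>i. F i \<inter> E) \<in> sets (Fc c)" by (rule sets.countable_UN)
  moreover have "(\<Union>i. F i) \<inter> E = (\<Union>i. F i \<inter> E)" by blast
  moreover have "(\<Union>i. F i) \<subseteq> \<Omega>" using h(2) by blast
  ultimately show "(\<Union>i. F i) \<in> Good E c" unfolding Good_def by (metis (mono_tags, lifting) mem_Collect_eq)
qed

lemma EO: "E \<in> sets (Fc c) \<Longrightarrow> E \<subseteq> \<Omega>"
  using sets.sets_into_space[of E "Fc c"] unfolding space_Fc .

lemma space_restr: "E \<in> sets (Fc c) \<Longrightarrow> space (restrict_space (Fc c) E) = E"
  using EO[of E c] unfolding space_restrict_space space_Fc by blast

lemma sets_restr: "E \<in> sets (Fc c) \<Longrightarrow> S \<in> sets (restrict_space (Fc c) E) \<longleftrightarrow> S \<subseteq> E \<and> S \<in> sets (Fc c)"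
proof -
  assume E: "E \<in> sets (Fc c)"
  then have "E \<inter> space (Fc c) = E" using EO[of E c] unfolding space_Fc by blast
  then have h: "E \<inter> space (Fc c) \<in> sets (Fc c)" using E by (simp only:)
  show ?thesis by (rule sets_restrict_space_iff[OF h])
qed

lemma restr_gen_Good:
  assumes "f \<in> measurable (restrict_space (Fc c) E) Y" "E \<in> sets (Fc c)"
  shows "gen_sets M f Y \<subseteq> Good E c"
proof
  fix S assume "S \<in> gen_sets M f Y"
  then obtain B' where B: "B' \<in> sets Y" "S = f -` B' \<inter> \<Omega>" unfolding gen_sets_def by blast
  have "f -` B' \<inter> space (restrict_space (Fc c) E) \<in> sets (restrict_space (Fc c) E)"
    using assms(1) B(1) by (rule measurable_sets)
  then have "f -` B' \<inter> E \<in> sets (Fc c)" unfolding space_restr[OF assms(2)] sets_restr[OF assms(2)] by blast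
  moreover have "S \<inter> E = f -` B' \<inter> E" using B EO[OF assms(2)] by blast
  ultimately show "S \<in> Good E c" using B unfolding Good_def mem_Collect_eq by (metis inf_le2)
qed

lemma Good_restr_meas:
  assumes "gen_sets M f Y \<subseteq> Good E c" "E \<in> sets (Fc c)" "f \<in> E \<rightarrow> space Y"
  shows "f \<in> measurable (restrict_space (Fc c) E) Y"
  unfolding measurable_def mem_Collect_eq space_restr[OF assms(2)]
proof (intro conjI ballI)
  show "f \<in> E \<rightarrow> space Y" by fact
  fix B' assume B: "B' \<in> sets Y"
  then have "f -` B' \<inter> \<Omega> \<in> Good E c" using assms(1) unfolding gen_sets_def by blast
  then have "(f -` B' \<inter> \<Omega>) \<inter> E \<in> sets (Fc c)" unfolding Good_def by blast
  moreover have eq: "f -` B' \<inter> E = (f -` B' \<inter> \<Omega>) \<inter> E" using EO[OF assms(2)] by blast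
  ultimately show "f -` B' \<inter> E \<in> sets (restrict_space (Fc c) E)"
    unfolding sets_restr[OF assms(2)] using eq by (metis inf_le2)
qed

lemma sets_sub_Good_meas:
  assumes "sets S \<subseteq> Good E c" "space S = \<Omega>" "f \<in> measurable S Y" "E \<in> sets (Fc c)"
  shows "f \<in> measurable (restrict_space (Fc c) E) Y"
proof (rule Good_restr_meas[OF _ assms(4)])
  show "gen_sets M f Y \<subseteq> Good E c" using gen_of_meas[OF assms(3,2)] assms(1) by blast
  show "f \<in> E \<rightarrow> space Y" using measurable_space[OF assms(3)] EO[OF assms(4)] assms(2) by blast
qed

lemma Good_Omega: "Good \<Omega> c = sets (Fc c)"
proof (intro set_eqI iffI)
  fix S assume "S \<in> Good \<Omega> c"
  then have "S \<subseteq> \<Omega>" "S \<inter> \<Omega> \<in> sets (Fc c)" unfolding Good_def by blast+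
  then show "S \<in> sets (Fc c)" by (simp only: Int_absorb2)
next
  fix S assume S: "S \<in> sets (Fc c)"
  then have "S \<subseteq> \<Omega>" by (rule EO)
  then have "S \<inter> \<Omega> = S" by (rule Int_absorb2)
  then show "S \<in> Good \<Omega> c" unfolding Good_def mem_Collect_eq using S \<open>S \<subseteq> \<Omega>\<close> by (simp only: simp_thms)
qed

lemma Omega_Fc: "\<Omega> \<in> sets (Fc c)"
  using sets.top[of "Fc c"] unfolding space_Fc .

lemma restr_Omega: "measurable (restrict_space (Fc c) \<Omega>) Y = measurable (Fc c) Y"
proof (rule measurable_cong_sets)
  show "sets (restrict_space (Fc c) \<Omega>) = sets (Fc c)"
    using sets_restr[OF Omega_Fc, of _ c] sets.sets_into_space[of _ "Fc c"] unfolding space_Fc by blast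
qed (rule refl)

lemma Fc_Good: "S \<in> sets (Fc c) \<Longrightarrow> E \<in> sets (Fc c) \<Longrightarrow> S \<in> Good E c"
  unfolding Good_def mem_Collect_eq using EO[of S c] sets.Int[of S "Fc c" E] by (intro conjI)

lemma sigma_Good: "G \<subseteq> Good E c \<Longrightarrow> E \<in> sets (Fc c) \<Longrightarrow> sigma_sets \<Omega> G \<subseteq> Good E c"
  by (rule sigma_algebra.sigma_sets_subset[OF Good_sigma])

lemma pred_cnt: "g \<in> measurable S (count_space UNIV) \<Longrightarrow> {\<omega> \<in> space S. P (g \<omega>)} \<in> sets S"
proof -
  assume g: "g \<in> measurable S (count_space UNIV)"
  have "g -` {y. P y} \<inter> space S \<in> sets S" by (rule measurable_sets[OF g]) (simp only: sets_count_space Pow_UNIV UNIV_I)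
  moreover have "g -` {y. P y} \<inter> space S = {\<omega> \<in> space S. P (g \<omega>)}" by blast
  ultimately show ?thesis by (simp only:)
qed

lemma cnt_comp: "g \<in> measurable S (count_space UNIV) \<Longrightarrow> (\<lambda>\<omega>. h (g \<omega>)) \<in> measurable S (count_space UNIV)"
  by (rule measurable_compose[OF _ measurable_count_space])

lemma restr_x_comp:
  assumes E: "E \<in> sets (Fc c)" and g: "g \<in> measurable (restrict_space (Fc c) E) (count_space UNIV)"
    and gm: "\<And>\<omega>. \<omega> \<in> E \<Longrightarrow> g \<omega> \<le> m" and xm: "\<And>j. j \<le> m \<Longrightarrow> x j \<in> borel_measurable (Fc c)"
  shows "(\<lambda>\<omega>. x (g \<omega>) \<omega>) \<in> borel_measurable (restrict_space (Fc c) E)"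
proof -
  have "(\<lambda>\<omega>. x (min (g \<omega>) m) \<omega>) \<in> borel_measurable (restrict_space (Fc c) E)"
  proof (rule measurable_compose_countable[where f="\<lambda>i \<omega>. x (min i m) \<omega>", OF _ g])
    fix i :: nat show "(\<lambda>\<omega>. x (min i m) \<omega>) \<in> borel_measurable (restrict_space (Fc c) E)"
      using xm[of "min i m"] by (intro measurable_restrict_space1) auto
  qed
  moreover have "\<And>\<omega>. \<omega> \<in> space (restrict_space (Fc c) E) \<Longrightarrow> x (min (g \<omega>) m) \<omega> = x (g \<omega>) \<omega>"
    using gm unfolding space_restr[OF E] by (simp add: min_absorb1)
  ultimately show ?thesis using measurable_cong[of "restrict_space (Fc c) E" "\<lambda>\<omega>. x (min (g \<omega>) m) \<omega>" "\<lambda>\<omega>. x (g \<omega>) \<omega>"] by (simp only:)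
qed

lemma mv_meas: "f \<in> borel_measurable S \<Longrightarrow> (\<lambda>\<omega>. (A' :: real^'p^'q) *v f \<omega>) \<in> borel_measurable S"
  by (rule borel_measurable_continuous_on[OF matrix_vector_mult_linear_continuous_on])

definition aoiC :: "nat \<Rightarrow> 'a \<Rightarrow> nat option" where
  "aoiC t \<omega> = aoi_c (\<lambda>s. tau s \<omega>) (\<lambda>s. \<delta> s \<omega>) t"

lemma aoiC_Suc: "aoiC (Suc t) \<omega> = (if \<delta> t \<omega> then Some (zeta t \<omega> + 1) else map_option Suc (aoiC t \<omega>))"
  by (simp add: aoiC_def zeta_def)

lemma aoiC_0: "aoiC 0 \<omega> = None"
  by (simp add: aoiC_def)

definition Gc :: "nat \<Rightarrow> 'a set set" where
  "Gc s = (\<Union>t\<in>{..s}. gen_sets M (\<lambda>\<omega>. aoi_c (\<lambda>s. tau s \<omega>) (\<lambda>s. \<delta> s \<omega>) t) (count_space UNIV)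
                 \<union> gen_sets M (ctrl_obs x tau \<delta> t) borel)
      \<union> (\<Union>s\<in>{..<s}. gen_sets M (\<delta> s) (count_space UNIV) \<union> gen_sets M (u s) borel)"

definition Ge :: "nat \<Rightarrow> 'a set set" where
  "Ge k = (\<Union>t\<in>{..k}. gen_sets M (\<lambda>\<omega>. aoi_e (\<lambda>s. tau s \<omega>) t) (count_space UNIV)
                 \<union> gen_sets M (\<lambda>\<omega>. x (t - aoi_e (\<lambda>s. tau s \<omega>) t) \<omega>) borel)
      \<union> sets (info_c M x tau \<delta> u k)"

lemma info_c_space: "space (info_c M x tau \<delta> u s) = \<Omega>"
  unfolding info_c_def by (rule space_measure_of_conv)

lemma info_e_space: "space (info_e M x tau \<delta> u s) = \<Omega>"
  unfolding info_e_def by (rule space_measure_of_conv)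

lemma Gc_Pow: "Gc s \<subseteq> Pow \<Omega>"
  unfolding Gc_def by (intro Un_least UN_least gen_sets_Pow)

lemma info_c_sets: "sets (info_c M x tau \<delta> u s) = sigma_sets \<Omega> (Gc s)"
  unfolding info_c_def Gc_def[symmetric] by (rule sets_measure_of[OF Gc_Pow])

lemma Ge_Pow: "Ge s \<subseteq> Pow \<Omega>"
  unfolding Ge_def using sets.space_closed[of "info_c M x tau \<delta> u s"]
  unfolding info_c_space by (intro Un_least UN_least gen_sets_Pow)

lemma info_e_sets: "sets (info_e M x tau \<delta> u s) = sigma_sets \<Omega> (Ge s)"
  unfolding info_e_def Ge_def[symmetric] by (rule sets_measure_of[OF Ge_Pow])

lemma info_c_sub_e: "sets (info_c M x tau \<delta> u s) \<subseteq> sets (info_e M x tau \<delta> u s)"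
  unfolding info_e_sets Ge_def by (rule subset_trans[OF _ sigma_sets_superset_generator]) (rule Un_upper2)

lemma trig_sets: "sets (sigma \<Omega> (sets (info_e M x tau \<delta> u r) \<union> gen_sets M (v r) borel))
   = sigma_sets \<Omega> (sets (info_e M x tau \<delta> u r) \<union> gen_sets M (v r) borel)"
  by (rule sets_measure_of) (use sets.space_closed[of "info_e M x tau \<delta> u r"] in \<open>unfold info_e_space, intro Un_least gen_sets_Pow\<close>)

lemma main:
  assumes "s \<le> N"
  shows "(\<forall>j \<le> min s c. x j \<in> borel_measurable (Fc c)) \<and> sets (info_e M x tau \<delta> u s) \<subseteq> Good (Es s c) c"
  using assms
proof (induction s rule: less_induct)
  case (less s)
  have sN: "s \<le> N" by fact
  have IH: "\<And>r. r < s \<Longrightarrow> (\<forall>j \<le> min r c. x j \<in> borel_measurable (Fc c)) \<and> sets (info_e M x tau \<delta> u r) \<subseteq> Good (Es r c) c"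
    using less.IH less.prems by simp
  define E where "E = Es s c"
  have E: "E \<in> sets (Fc c)" unfolding E_def by (rule Es_Fc[OF sN])
  define R where "R = restrict_space (Fc c) E"
  have spR: "space R = E" unfolding R_def by (rule space_restr[OF E])
  have u_R: "u r \<in> borel_measurable R" if r: "r < s" for r
  proof -
    have rN: "r \<le> N" using r sN by simp
    have "sets (info_c M x tau \<delta> u r) \<subseteq> Good (Es r c) c"
      using info_c_sub_e[of r] IH[OF r] by (rule subset_trans[OF _ conjunct2])
    then have "u r \<in> measurable (restrict_space (Fc c) (Es r c)) borel"
      by (rule sets_sub_Good_meas[OF _ info_c_space ctrl[OF rN] Es_Fc[OF rN]])
    then show ?thesis unfolding R_def E_def
      by (rule measurable_restrict_mono[OF _ Es_mono]) (use r in simp)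
  qed
  have d_R: "\<delta> r \<in> measurable R (count_space UNIV)" if r: "r < s" for r
  proof -
    have rN: "r \<le> N" using r sN by simp
    have EsR: "Es r c \<in> sets (Fc c)" by (rule Es_Fc[OF rN])
    have "gen_sets M (v r) borel \<subseteq> sets (Fc c)" by (rule gen_of_meas[OF v_Fc[OF rN] space_Fc])
    then have "gen_sets M (v r) borel \<subseteq> Good (Es r c) c" using Fc_Good[OF _ EsR] by (rule subset_trans[OF _ subsetI])
    then have "sets (info_e M x tau \<delta> u r) \<union> gen_sets M (v r) borel \<subseteq> Good (Es r c) c"
      using IH[OF r] by (intro Un_least) simp_all
    then have "sets (sigma \<Omega> (sets (info_e M x tau \<delta> u r) \<union> gen_sets M (v r) borel)) \<subseteq> Good (Es r c) c"
      unfolding trig_sets by (rule sigma_Good[OF _ EsR])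
    then have "\<delta> r \<in> measurable (restrict_space (Fc c) (Es r c)) (count_space UNIV)"
      by (rule sets_sub_Good_meas[OF _ space_measure_of_conv trig[OF rN] EsR])
    then show ?thesis unfolding R_def E_def
      by (rule measurable_restrict_mono[OF _ Es_mono]) (use r in simp)
  qed
  have x_Fc: "x j \<in> borel_measurable (Fc c)" if "j \<le> min s c" for j
    using that
  proof (induction j)
    case 0 show ?case by (rule x0_Fc)
  next
    case (Suc j)
    have js: "j < s" "j < c" "j < N" using Suc.prems sN by simp_all
    have "sets (info_c M x tau \<delta> u j) \<subseteq> Good (Es j c) c"
      using info_c_sub_e[of j] IH[OF js(1)] by (rule subset_trans[OF _ conjunct2])
    then have "sets (info_c M x tau \<delta> u j) \<subseteq> Good \<Omega> c" using Es_all[of j c] js(2) by simp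
    then have "u j \<in> measurable (restrict_space (Fc c) \<Omega>) borel"
      by (rule sets_sub_Good_meas[OF _ info_c_space ctrl Omega_Fc]) (use js in simp)
    then have uj: "u j \<in> borel_measurable (Fc c)" unfolding restr_Omega .
    have xj: "x j \<in> borel_measurable (Fc c)" using Suc by simp
    have wj: "w j \<in> borel_measurable (Fc c)" by (rule w_Fc) (use js in simp)
    have "(\<lambda>\<omega>. A *v x j \<omega> + B *v u j \<omega> + w j \<omega>) \<in> borel_measurable (Fc c)"
      by (intro borel_measurable_add mv_meas xj uj wj)
    moreover have "\<And>\<omega>. \<omega> \<in> space (Fc c) \<Longrightarrow> A *v x j \<omega> + B *v u j \<omega> + w j \<omega> = x (Suc j) \<omega>"
      using dyn[OF js(3)] by simp
    ultimately show ?case using measurable_cong[of "Fc c" "\<lambda>\<omega>. A *v x j \<omega> + B *v u j \<omega> + w j \<omega>" "x (Suc j)"]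
      by (simp only:)
  qed
  have z_R: "zeta t \<in> measurable R (count_space UNIV)" if "t \<le> s" for t
    unfolding R_def by (rule measurable_restrict_space1[OF zeta_Fc]) (use that sN in simp)
  have a_R: "aoiC t \<in> measurable R (count_space UNIV)" if "t \<le> s" for t
    using that
  proof (induction t)
    case 0 show ?case unfolding aoiC_0 by (rule measurable_const) simp
  next
    case (Suc t)
    have ts: "t < s" using Suc.prems by simp
    have "(\<lambda>\<omega>. if \<delta> t \<omega> then Some (zeta t \<omega> + 1) else map_option Suc (aoiC t \<omega>)) \<in> measurable R (count_space UNIV)"
    proof (rule measurable_If)
      show "(\<lambda>\<omega>. Some (zeta t \<omega> + 1)) \<in> measurable R (count_space UNIV)" by (rule cnt_comp[OF z_R]) (use ts in simp)
      show "(\<lambda>\<omega>. map_option Suc (aoiC t \<omega>)) \<in> measurable R (count_space UNIV)" by (rule cnt_comp[OF Suc.IH]) (use ts in simp)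
      show "{\<omega> \<in> space R. \<delta> t \<omega>} \<in> sets R" by (rule pred_cnt[OF d_R[OF ts], of id, unfolded id_def])
    qed
    then show ?case unfolding aoiC_Suc[abs_def] .
  qed
  have xobs_R: "(\<lambda>\<omega>. x (t - zeta t \<omega>) \<omega>) \<in> borel_measurable R" if t: "t \<le> s" for t
    unfolding R_def
  proof (rule restr_x_comp[OF E _ _ x_Fc])
    show "(\<lambda>\<omega>. t - zeta t \<omega>) \<in> measurable (restrict_space (Fc c) E) (count_space UNIV)"
      using cnt_comp[OF z_R[OF t]] unfolding R_def .
    fix \<omega> assume "\<omega> \<in> E"
    then have "s - zeta s \<omega> \<le> c" unfolding E_def Es_def by simp
    moreover have "t - zeta t \<omega> \<le> s - zeta s \<omega>" unfolding zeta_def by (rule aoi_e_mono[OF t])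
    ultimately show "t - zeta t \<omega> \<le> min s c" using t by simp
  qed simp
  have cobs_R: "ctrl_obs x tau \<delta> t \<in> borel_measurable R" if t: "t \<le> s" for t
  proof -
    define g where "g = (\<lambda>\<omega>. t - the (aoiC t \<omega>))"
    have g: "g \<in> measurable R (count_space UNIV)" unfolding g_def by (rule cnt_comp[OF a_R[OF t]])
    have gle: "g \<omega> \<le> min s c" if oE: "\<omega> \<in> E" and nn: "aoiC t \<omega> \<noteq> None" for \<omega>
    proof -
      obtain e where e: "aoiC t \<omega> = Some e" using nn by auto
      then obtain t' where t': "t' < t" "t - e = t' - zeta t' \<omega>" "e \<le> t"
        using aoi_c_some[of "\<lambda>s. tau s \<omega>" "\<lambda>s. \<delta> s \<omega>" t e] unfolding aoiC_def zeta_def by blast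
      have "s - zeta s \<omega> \<le> c" using oE unfolding E_def Es_def by simp
      moreover have "t' - zeta t' \<omega> \<le> s - zeta s \<omega>" unfolding zeta_def by (rule aoi_e_mono) (use t' t in simp)
      ultimately show ?thesis using t' t e unfolding g_def by simp
    qed
    define g' where "g' = (\<lambda>\<omega>. min (g \<omega>) (min s c))"
    have g': "g' \<in> measurable R (count_space UNIV)" unfolding g'_def by (rule cnt_comp[OF g])
    have "(\<lambda>\<omega>. x (g' \<omega>) \<omega>) \<in> borel_measurable R"
      unfolding R_def by (rule restr_x_comp[OF E _ _ x_Fc, where m="min s c"]) (use g' in \<open>simp_all add: R_def g'_def min_le_iff_disj\<close>)
    then have "(\<lambda>\<omega>. if aoiC t \<omega> = None then 0 else x (g' \<omega>) \<omega>) \<in> borel_measurable R"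
      by (intro measurable_If measurable_const pred_cnt[OF a_R[OF t]]) simp_all
    moreover have "(if aoiC t \<omega> = None then 0 else x (g' \<omega>) \<omega>) = ctrl_obs x tau \<delta> t \<omega>" if "\<omega> \<in> space R" for \<omega>
    proof (cases "aoiC t \<omega>")
      case None then show ?thesis unfolding ctrl_obs_def aoiC_def[symmetric] by simp
    next
      case (Some e)
      have "g \<omega> \<le> min s c" using gle[of \<omega>] that Some unfolding spR by simp
      then have "g' \<omega> = t - e" unfolding g'_def using Some unfolding g_def by simp
      then show ?thesis unfolding ctrl_obs_def aoiC_def[symmetric] using Some by simp
    qed
    ultimately show ?thesis using measurable_cong[of R "\<lambda>\<omega>. if aoiC t \<omega> = None then 0 else x (g' \<omega>) \<omega>" "ctrl_obs x tau \<delta> t"]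
      by (simp only:)
  qed
  have Gc_Good: "Gc s \<subseteq> Good E c"
    unfolding Gc_def
  proof (intro Un_least UN_least)
    fix t assume "t \<in> {..s}"
    then have t: "t \<le> s" by simp
    show "gen_sets M (\<lambda>\<omega>. aoi_c (\<lambda>s. tau s \<omega>) (\<lambda>s. \<delta> s \<omega>) t) (count_space UNIV) \<subseteq> Good E c"
      using restr_gen_Good[OF a_R[OF t, unfolded R_def aoiC_def[abs_def]] E] .
    show "gen_sets M (ctrl_obs x tau \<delta> t) borel \<subseteq> Good E c"
      using restr_gen_Good[OF cobs_R[OF t, unfolded R_def] E] .
  next
    fix r assume "r \<in> {..<s}"
    then have r: "r < s" by simp
    show "gen_sets M (\<delta> r) (count_space UNIV) \<subseteq> Good E c"
      using restr_gen_Good[OF d_R[OF r, unfolded R_def] E] .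
    show "gen_sets M (u r) borel \<subseteq> Good E c"
      using restr_gen_Good[OF u_R[OF r, unfolded R_def] E] .
  qed
  have Ge_Good: "Ge s \<subseteq> Good E c"
    unfolding Ge_def
  proof (intro Un_least UN_least)
    fix t assume "t \<in> {..s}"
    then have t: "t \<le> s" by simp
    show "gen_sets M (\<lambda>\<omega>. aoi_e (\<lambda>s. tau s \<omega>) t) (count_space UNIV) \<subseteq> Good E c"
      using restr_gen_Good[OF z_R[OF t, unfolded R_def zeta_def[abs_def]] E] .
    show "gen_sets M (\<lambda>\<omega>. x (t - aoi_e (\<lambda>s. tau s \<omega>) t) \<omega>) borel \<subseteq> Good E c"
      using restr_gen_Good[OF xobs_R[OF t, unfolded R_def zeta_def] E] .
  next
    show "sets (info_c M x tau \<delta> u s) \<subseteq> Good E c"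
      unfolding info_c_sets by (rule sigma_Good[OF Gc_Good E])
  qed
  have "sets (info_e M x tau \<delta> u s) \<subseteq> Good (Es s c) c"
    unfolding info_e_sets E_def[symmetric] by (rule sigma_Good[OF Ge_Good E])
  moreover have "\<forall>j \<le> min s c. x j \<in> borel_measurable (Fc c)" using x_Fc by simp
  ultimately show ?case by simp
qed

end

context sys begin

lemma sub_e_M: "s \<le> N \<Longrightarrow> sets (info_e M x tau \<delta> u s) \<subseteq> sets M"
proof -
  assume sN: "s \<le> N"
  have "sets (info_e M x tau \<delta> u s) \<subseteq> Good (Es s N) N" using main[OF sN, of N] by (rule conjunct2)
  also have "Es s N = \<Omega>" by (rule Es_all[OF sN])
  also have "Good \<Omega> N = sets (Fc N)" by (rule Good_Omega)
  also have "\<dots> \<subseteq> sets M" by (rule Fc_sub_M) simp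
  finally show ?thesis .
qed

lemma subalg_e: "s \<le> N \<Longrightarrow> subalgebra M (info_e M x tau \<delta> u s)"
  unfolding subalgebra_def using sub_e_M info_e_space by blast

lemma subalg_c: "s \<le> N \<Longrightarrow> subalgebra M (info_c M x tau \<delta> u s)"
  unfolding subalgebra_def using sub_e_M info_c_sub_e info_c_space by blast

lemma subalg_Fc: "c \<le> Suc N \<Longrightarrow> subalgebra M (Fc c)"
  unfolding subalgebra_def using Fc_sub_M space_Fc by blast

lemma x_M: "j \<le> N \<Longrightarrow> x j \<in> borel_measurable M"
proof -
  assume jN: "j \<le> N"
  have "x j \<in> borel_measurable (Fc N)" using main[of N N] jN by simp
  then show ?thesis by (rule measurable_from_subalg[OF subalg_Fc, rotated]) simp
qed

lemma u_M: "j \<le> N \<Longrightarrow> u j \<in> borel_measurable M"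
  by (rule measurable_from_subalg[OF subalg_c ctrl])

lemma u_e: "r < k \<Longrightarrow> u r \<in> borel_measurable (info_e M x tau \<delta> u k)"
proof -
  assume rk: "r < k"
  have "gen_sets M (u r) borel \<subseteq> Gc k" unfolding Gc_def using rk by blast
  also have "\<dots> \<subseteq> sets (info_c M x tau \<delta> u k)" unfolding info_c_sets by (rule sigma_sets_superset_generator)
  also have "\<dots> \<subseteq> sets (info_e M x tau \<delta> u k)" by (rule info_c_sub_e)
  finally have "gen_sets M (u r) borel \<subseteq> sets (info_e M x tau \<delta> u k)" .
  moreover have "u r \<in> \<Omega> \<rightarrow> space borel" by simp
  ultimately show ?thesis by (rule meas_of_gen[OF _ info_e_space])
qed

lemma zeta_e: "zeta t \<in> measurable (info_e M x tau \<delta> u k) (count_space UNIV)" if "t \<le> k"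
proof -
  have "gen_sets M (zeta t) (count_space UNIV) \<subseteq> Ge k" unfolding Ge_def zeta_def[abs_def] using that by blast
  also have "\<dots> \<subseteq> sets (info_e M x tau \<delta> u k)" unfolding info_e_sets by (rule sigma_sets_superset_generator)
  finally show ?thesis by (rule meas_of_gen[OF _ info_e_space]) simp
qed

lemma xobs_e: "(\<lambda>\<omega>. x (k - zeta k \<omega>) \<omega>) \<in> borel_measurable (info_e M x tau \<delta> u k)"
proof -
  have "gen_sets M (\<lambda>\<omega>. x (k - zeta k \<omega>) \<omega>) borel \<subseteq> Ge k" unfolding Ge_def zeta_def by blast
  also have "\<dots> \<subseteq> sets (info_e M x tau \<delta> u k)" unfolding info_e_sets by (rule sigma_sets_superset_generator)
  finally show ?thesis by (rule meas_of_gen[OF _ info_e_space]) simp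
qed

lemma gen_Int_stable: "Int_stable (gen_sets M f Y)"
  unfolding Int_stable_def gen_sets_def
proof (safe)
  fix A1 B1 assume "A1 \<in> sets Y" "B1 \<in> sets Y"
  then have "A1 \<inter> B1 \<in> sets Y" by (rule sets.Int)
  moreover have "f -` A1 \<inter> \<Omega> \<inter> (f -` B1 \<inter> \<Omega>) = f -` (A1 \<inter> B1) \<inter> \<Omega>" by blast
  ultimately show "\<exists>A. f -` A1 \<inter> \<Omega> \<inter> (f -` B1 \<inter> \<Omega>) = f -` A \<inter> \<Omega> \<and> A \<in> sets Y" by blast
qed

lemma noise_orth:
  assumes cN: "c \<le> N" and Q: "Q \<in> sets (Fc c)"
  shows "(\<integral>\<omega>. indicator Q \<omega> * w c \<omega> $ j \<partial>M) = 0" "integrable M (\<lambda>\<omega>. indicator Q \<omega> * w c \<omega> $ j)"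
proof -
  interpret prob_space M by (rule prob)
  have ind: "indep_sets Eg ({SX0} \<union> SW ` {..N} \<union> STau ` {..N} \<union> SV ` {..N})"
    using indep unfolding Eg_def .
  define I where "I = (\<lambda>b. if b then I1 c else {SW c})"
  have "indep_sets Eg (\<Union>b\<in>UNIV. I b)"
  proof (rule indep_sets_mono_index[OF _ ind])
    show "(\<Union>b\<in>UNIV. I b) \<subseteq> {SX0} \<union> SW ` {..N} \<union> STau ` {..N} \<union> SV ` {..N}"
      unfolding I_def I1_def using cN by auto
  qed
  then have "indep_sets (\<lambda>b. sigma_sets \<Omega> (\<Union>i\<in>I b. Eg i)) UNIV"
  proof (rule indep_sets_collect_sigma)
    fix i b show "Int_stable (Eg i)" unfolding Eg_def by (cases i) (simp_all add: gen_Int_stable)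
  next
    show "disjoint_family_on I UNIV" unfolding disjoint_family_on_def I_def I1_def by auto
  qed
  moreover have "(\<lambda>b. sigma_sets \<Omega> (\<Union>i\<in>I b. Eg i)) = case_bool (sets (Fc c)) (sigma_sets \<Omega> (Eg (SW c)))"
    by (rule ext, simp split: bool.split add: I_def sets_Fc)
  ultimately have indQB: "indep_set (sets (Fc c)) (sigma_sets \<Omega> (Eg (SW c)))"
    unfolding indep_set_def by simp
  have cN': "c \<le> Suc N" using cN by simp
  have QM: "Q \<in> sets M" using Fc_sub_M[OF cN'] Q by blast
  have wm: "w c \<in> borel_measurable M" by (rule w_M[OF cN])
  have wj: "(\<lambda>\<omega>. w c \<omega> $ j) \<in> borel_measurable M" by (rule nth_meas[OF wm])
  have projm: "(\<lambda>v::real^'n. v $ j) \<in> borel_measurable borel"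
    by (rule borel_measurable_continuous_onI[OF continuous_on_component[OF continuous_on_id]])
  have iQ: "indicator Q \<in> borel_measurable (Fc c)" using Q by (rule borel_measurable_indicator)
  have iv: "indep_var borel (indicator Q) borel (\<lambda>\<omega>. w c \<omega> $ j)"
    unfolding indep_var_eq
  proof (intro conjI)
    show "random_variable borel (indicator Q)" using QM by (rule borel_measurable_indicator)
    show "random_variable borel (\<lambda>\<omega>. w c \<omega> $ j)" by (rule wj)
    have s1: "sigma_sets \<Omega> {indicator Q -` B' \<inter> \<Omega> |B'. B' \<in> sets borel} \<subseteq> sets (Fc c)"
    proof -
      have "{indicator Q -` B' \<inter> \<Omega> |B'. B' \<in> sets borel} \<subseteq> sets (Fc c)"
        using measurable_sets[OF iQ] unfolding space_Fc by blast
      then have "sigma_sets \<Omega> {indicator Q -` B' \<inter> \<Omega> |B'. B' \<in> sets borel} \<subseteq> sigma_sets \<Omega> (sets (Fc c))"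
        by (rule sigma_sets_mono')
      also have "\<dots> = sets (Fc c)" using sets.sigma_sets_eq[of "Fc c"] unfolding space_Fc .
      finally show ?thesis .
    qed
    have s2: "sigma_sets \<Omega> {(\<lambda>\<omega>. w c \<omega> $ j) -` B' \<inter> \<Omega> |B'. B' \<in> sets borel} \<subseteq> sigma_sets \<Omega> (Eg (SW c))"
    proof (rule sigma_sets_mono', safe)
      fix B' :: "real set" assume "B' \<in> sets borel"
      then have "(\<lambda>v::real^'n. v $ j) -` B' \<in> sets borel" using measurable_sets[OF projm] by simp
      moreover have "(\<lambda>\<omega>. w c \<omega> $ j) -` B' \<inter> \<Omega> = w c -` ((\<lambda>v. v $ j) -` B') \<inter> \<Omega>" by auto
      ultimately show "(\<lambda>\<omega>. w c \<omega> $ j) -` B' \<inter> \<Omega> \<in> Eg (SW c)" unfolding Eg_def gen_sets_def by auto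
    qed
    show "indep_set (sigma_sets \<Omega> {indicator Q -` B' \<inter> \<Omega> |B'. B' \<in> sets borel})
                    (sigma_sets \<Omega> {(\<lambda>\<omega>. w c \<omega> $ j) -` B' \<inter> \<Omega> |B'. B' \<in> sets borel})"
      using indQB unfolding indep_set_def
      by (rule indep_sets_mono_sets) (use s1 s2 in \<open>auto split: bool.split\<close>)
  qed
  have intQ: "integrable M (indicator Q :: 'a \<Rightarrow> real)"
    by (rule integrable_real_indicator[OF QM]) (simp add: less_top[symmetric])
  note gi = gauss_int[OF w_gauss[OF cN], of j]
  show "(\<integral>\<omega>. indicator Q \<omega> * w c \<omega> $ j \<partial>M) = 0"
    using indep_var_lebesgue_integral[OF iv intQ gi(1)] gi(3) by simp
  show "integrable M (\<lambda>\<omega>. indicator Q \<omega> * w c \<omega> $ j)"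
    using indep_var_integrable[OF iv intQ gi(1)] .
qed

end

lemma vec_meas: "(\<And>i. (\<lambda>\<omega>. g i \<omega>) \<in> borel_measurable S) \<Longrightarrow> (\<lambda>\<omega>. (\<chi> i. g i \<omega>) :: real^'n) \<in> borel_measurable S"
  unfolding borel_measurable_euclidean_space[where 'c="real^'n"] Basis_vec_def
  by (auto simp: inner_axis)

lemma matpow_comm: "matpow A j ** A = A ** matpow A j"
proof (induction j)
  case (Suc j)
  have "matpow A (Suc j) ** A = A ** (matpow A j ** A)" by (simp add: matrix_mul_assoc)
  also have "\<dots> = A ** (A ** matpow A j)" using Suc by simp
  finally show ?case by simp
qed simp

lemma mv_sum: "(M :: real^'p^'q) *v (\<Sum>t\<in>I. f t) = (\<Sum>t\<in>I. M *v f t)"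
  by (induction I rule: infinite_finite_induct) (simp_all add: matrix_vector_right_distrib)

context sys begin

lemma Es_char: "t \<le> k \<Longrightarrow> Es k (k - t) = {\<omega> \<in> \<Omega>. t \<le> zeta k \<omega>}"
  unfolding Es_def using zeta_le[of k] by auto

lemma key_set:
  assumes kN: "k \<le> N" and t: "t \<le> k" and Q: "Q \<in> sets (info_e M x tau \<delta> u k)"
  shows "Q \<inter> {\<omega> \<in> \<Omega>. t \<le> zeta k \<omega>} \<in> sets (Fc (k - t))"
proof -
  have "Q \<in> Good (Es k (k - t)) (k - t)" using main[OF kN, of "k - t"] Q by blast
  then show ?thesis unfolding Good_def Es_char[OF t] by blast
qed

lemma key_orth:
  assumes kN: "k \<le> N" and t: "1 \<le> t" "t \<le> k" and Q: "Q \<in> sets (info_e M x tau \<delta> u k)"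
  shows "(\<integral>\<omega>. indicator Q \<omega> * (indicator {\<omega> \<in> \<Omega>. t \<le> zeta k \<omega>} \<omega> * w (k - t) \<omega> $ l) \<partial>M) = 0"
    "integrable M (\<lambda>\<omega>. indicator Q \<omega> * (indicator {\<omega> \<in> \<Omega>. t \<le> zeta k \<omega>} \<omega> * w (k - t) \<omega> $ l))"
proof -
  have eq: "(\<lambda>\<omega>. indicator Q \<omega> * (indicator {\<omega> \<in> \<Omega>. t \<le> zeta k \<omega>} \<omega> * w (k - t) \<omega> $ l))
     = (\<lambda>\<omega>. indicator (Q \<inter> {\<omega> \<in> \<Omega>. t \<le> zeta k \<omega>}) \<omega> * w (k - t) \<omega> $ l)"
    by (rule ext) (simp add: indicator_inter_arith)
  have cN: "k - t \<le> N" using kN by simp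
  show "(\<integral>\<omega>. indicator Q \<omega> * (indicator {\<omega> \<in> \<Omega>. t \<le> zeta k \<omega>} \<omega> * w (k - t) \<omega> $ l) \<partial>M) = 0"
    unfolding eq by (rule noise_orth(1)[OF cN key_set[OF kN t(2) Q]])
  show "integrable M (\<lambda>\<omega>. indicator Q \<omega> * (indicator {\<omega> \<in> \<Omega>. t \<le> zeta k \<omega>} \<omega> * w (k - t) \<omega> $ l))"
    unfolding eq by (rule noise_orth(2)[OF cN key_set[OF kN t(2) Q]])
qed

lemma unroll:
  assumes kN: "k \<le> N" and \<omega>: "\<omega> \<in> \<Omega>"
  shows "j \<le> k \<Longrightarrow> x k \<omega> = matpow A j *v x (k - j) \<omega> + (\<Sum>t\<in>{1..j}. matpow A (t - 1) *v (B *v u (k - t) \<omega> + w (k - t) \<omega>))"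
proof (induction j)
  case 0 then show ?case by simp
next
  case (Suc j)
  have kj: "k - j = Suc (k - Suc j)" "k - Suc j < N" using Suc.prems kN by simp_all
  have xs: "x (k - j) \<omega> = A *v x (k - Suc j) \<omega> + B *v u (k - Suc j) \<omega> + w (k - Suc j) \<omega>"
    unfolding kj(1) by (rule dyn[OF kj(2) \<omega>])
  have "x k \<omega> = matpow A j *v x (k - j) \<omega> + (\<Sum>t\<in>{1..j}. matpow A (t - 1) *v (B *v u (k - t) \<omega> + w (k - t) \<omega>))"
    using Suc by simp
  also have "matpow A j *v x (k - j) \<omega> = matpow A (Suc j) *v x (k - Suc j) \<omega> + matpow A j *v (B *v u (k - Suc j) \<omega> + w (k - Suc j) \<omega>)"
    unfolding xs by (simp add: matrix_vector_right_distrib matrix_vector_mul_assoc matpow_comm add.assoc)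
  finally show ?case by (simp add: add.assoc add.commute)
qed

end

lemma mv_comp: "((M :: real^'p^'q) *v v) $ i = (\<Sum>l\<in>UNIV. M $ i $ l * v $ l)"
  by (simp add: matrix_vector_mult_def)

lemma normsq: "(norm (v::real^'n))^2 = (\<Sum>i\<in>UNIV. (v $ i)^2)"
  unfolding power2_norm_eq_inner inner_vec_def by (simp add: power2_eq_square)

context sys begin

lemma u_L2: "j \<le> N \<Longrightarrow> L2 M (\<lambda>\<omega>. u j \<omega> $ i)"
proof -
  assume jN: "j \<le> N"
  have um: "(\<lambda>\<omega>. u j \<omega> $ i) \<in> borel_measurable M" by (rule nth_meas[OF u_M[OF jN]])
  have "integrable M (\<lambda>\<omega>. (u j \<omega> $ i)^2)"
  proof (rule Bochner_Integration.integrable_bound[OF ctrl_L2[OF jN]])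
    show "(\<lambda>\<omega>. (u j \<omega> $ i)^2) \<in> borel_measurable M" using um by measurable
    show "AE \<omega> in M. norm ((u j \<omega> $ i)^2) \<le> norm ((norm (u j \<omega>))^2)"
    proof (rule AE_I2)
      fix \<omega>
      have "\<bar>u j \<omega> $ i\<bar> \<le> norm (u j \<omega>)" by (rule component_le_norm_cart)
      then have "\<bar>u j \<omega> $ i\<bar>^2 \<le> (norm (u j \<omega>))^2" by (rule power_mono) simp
      then show "norm ((u j \<omega> $ i)^2) \<le> norm ((norm (u j \<omega>))^2)" by simp
    qed
  qed
  then show ?thesis unfolding L2_def using um by simp
qed

lemma w_L2: "j \<le> N \<Longrightarrow> L2 M (\<lambda>\<omega>. w j \<omega> $ i)"
  unfolding L2_def using gauss_int[OF w_gauss, of j i] nth_meas[OF w_M] by simp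

lemma x0_L2: "L2 M (\<lambda>\<omega>. x 0 \<omega> $ i)"
  unfolding L2_def using gauss_int[OF x0_gauss, of i] nth_meas[OF x0_M] by simp

lemma x_L2: "k \<le> N \<Longrightarrow> L2 M (\<lambda>\<omega>. x k \<omega> $ i)"
proof (induction k arbitrary: i)
  case 0 show ?case by (rule x0_L2)
next
  case (Suc k)
  have kN: "k < N" "k \<le> N" using Suc.prems by simp_all
  have "L2 M (\<lambda>\<omega>. (\<Sum>l\<in>UNIV. A $ i $ l * x k \<omega> $ l) + (\<Sum>l\<in>UNIV. B $ i $ l * u k \<omega> $ l) + w k \<omega> $ i)"
    by (intro L2_add L2_sum L2_cmult Suc.IH u_L2 w_L2 kN)
  then show ?case
    by (rule L2_cong[rotated]) (simp add: dyn[OF kN(1)] mv_comp)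
qed

definition Fm :: "nat \<Rightarrow> 'a \<Rightarrow> real^'n" where
  "Fm k \<omega> = matpow A (zeta k \<omega>) *v x (k - zeta k \<omega>) \<omega> + (\<Sum>t\<in>{1..zeta k \<omega>}. matpow A (t - 1) *v (B *v u (k - t) \<omega>))"

definition Et :: "nat \<Rightarrow> nat \<Rightarrow> 'a set" where
  "Et k t = {\<omega> \<in> \<Omega>. t \<le> zeta k \<omega>}"

definition noise :: "nat \<Rightarrow> 'n \<Rightarrow> 'a \<Rightarrow> real" where
  "noise k i \<omega> = (\<Sum>t\<in>{1..k}. \<Sum>l\<in>UNIV. matpow A (t - 1) $ i $ l * (indicator (Et k t) \<omega> * w (k - t) \<omega> $ l))"

lemma decomp:
  assumes kN: "k \<le> N" and \<omega>: "\<omega> \<in> \<Omega>"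
  shows "x k \<omega> $ i = Fm k \<omega> $ i + noise k i \<omega>"
proof -
  define z where "z = zeta k \<omega>"
  have zk: "z \<le> k" unfolding z_def by (rule zeta_le)
  have "x k \<omega> = matpow A z *v x (k - z) \<omega> + (\<Sum>t\<in>{1..z}. matpow A (t - 1) *v (B *v u (k - t) \<omega> + w (k - t) \<omega>))"
    by (rule unroll[OF kN \<omega> zk])
  also have "\<dots> = Fm k \<omega> + (\<Sum>t\<in>{1..z}. matpow A (t - 1) *v w (k - t) \<omega>)"
    unfolding Fm_def z_def[symmetric] by (simp add: matrix_vector_right_distrib sum.distrib add.assoc)
  finally have "x k \<omega> $ i = Fm k \<omega> $ i + (\<Sum>t\<in>{1..z}. (matpow A (t - 1) *v w (k - t) \<omega>) $ i)" by simp
  also have "(\<Sum>t\<in>{1..z}. (matpow A (t - 1) *v w (k - t) \<omega>) $ i) = (\<Sum>t\<in>{t \<in> {1..k}. t \<le> z}. (matpow A (t - 1) *v w (k - t) \<omega>) $ i)"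
    using zk by (intro sum.cong) auto
  also have "\<dots> = (\<Sum>t\<in>{1..k}. if t \<le> z then (matpow A (t - 1) *v w (k - t) \<omega>) $ i else 0)"
    by (rule sum.inter_filter) simp
  also have "\<dots> = noise k i \<omega>"
    unfolding noise_def
  proof (rule sum.cong[OF refl])
    fix t assume "t \<in> {1..k}"
    have "indicator (Et k t) \<omega> = (if t \<le> z then 1 else (0::real))" unfolding Et_def z_def using \<omega> by simp
    then show "(if t \<le> z then (matpow A (t - 1) *v w (k - t) \<omega>) $ i else 0) =
      (\<Sum>l\<in>UNIV. matpow A (t - 1) $ i $ l * (indicator (Et k t) \<omega> * w (k - t) \<omega> $ l))"
      by (simp add: mv_comp)
  qed
  finally show ?thesis .
qed

lemma zeta_M: "k \<le> N \<Longrightarrow> zeta k \<in> measurable M (count_space UNIV)"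
  by (rule measurable_from_subalg[OF subalg_Fc[of N] zeta_Fc]) simp_all

lemma Et_M: "k \<le> N \<Longrightarrow> Et k t \<in> sets M"
  unfolding Et_def using pred_cnt[OF zeta_M, of k "\<lambda>n. t \<le> n"] by simp

lemma noise_L2: "k \<le> N \<Longrightarrow> L2 M (noise k i)"
proof -
  assume kN: "k \<le> N"
  have "L2 M (\<lambda>\<omega>. \<Sum>t\<in>{1..k}. \<Sum>l\<in>UNIV. matpow A (t - 1) $ i $ l * (indicator (Et k t) \<omega> * w (k - t) \<omega> $ l))"
    by (intro L2_sum L2_cmult L2_indicator Et_M kN w_L2) (use kN in simp)
  then show ?thesis unfolding noise_def[abs_def] .
qed

lemma Fm_L2: "k \<le> N \<Longrightarrow> L2 M (\<lambda>\<omega>. Fm k \<omega> $ i)"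
proof -
  assume kN: "k \<le> N"
  have "L2 M (\<lambda>\<omega>. x k \<omega> $ i - noise k i \<omega>)" by (rule L2_diff[OF x_L2[OF kN] noise_L2[OF kN]])
  then show ?thesis by (rule L2_cong[rotated]) (simp add: decomp[OF kN])
qed

lemma Fm_meas: "k \<le> N \<Longrightarrow> Fm k \<in> borel_measurable (info_e M x tau \<delta> u k)"
proof -
  assume kN: "k \<le> N"
  let ?F = "info_e M x tau \<delta> u k"
  have p1: "(\<lambda>\<omega>. matpow A (zeta k \<omega>) *v x (k - zeta k \<omega>) \<omega>) \<in> borel_measurable ?F"
    by (rule measurable_compose_countable[where f="\<lambda>n \<omega>. matpow A n *v x (k - zeta k \<omega>) \<omega>", OF mv_meas[OF xobs_e] zeta_e]) simp
  define G where "G = (\<lambda>n \<omega>. \<Sum>t\<in>{1..min n k}. matpow A (t - 1) *v (B *v u (k - t) \<omega>))"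
  have Gm: "G n \<in> borel_measurable ?F" for n
    unfolding G_def
  proof (rule borel_measurable_sum)
    fix t assume "t \<in> {1..min n k}"
    then have "k - t < k" by auto
    then show "(\<lambda>\<omega>. matpow A (t - 1) *v (B *v u (k - t) \<omega>)) \<in> borel_measurable ?F"
      by (intro mv_meas u_e)
  qed
  have "(\<lambda>\<omega>. G (zeta k \<omega>) \<omega>) \<in> borel_measurable ?F"
    by (rule measurable_compose_countable[where f=G, OF Gm zeta_e]) simp
  moreover have "(\<lambda>\<omega>. G (zeta k \<omega>) \<omega>) = (\<lambda>\<omega>. \<Sum>t\<in>{1..zeta k \<omega>}. matpow A (t - 1) *v (B *v u (k - t) \<omega>))"
    unfolding G_def using zeta_le[of k] by (simp add: min_absorb1)
  ultimately have p2: "(\<lambda>\<omega>. \<Sum>t\<in>{1..zeta k \<omega>}. matpow A (t - 1) *v (B *v u (k - t) \<omega>)) \<in> borel_measurable ?F" by simp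
  show ?thesis unfolding Fm_def[abs_def] by (rule borel_measurable_add[OF p1 p2])
qed

end

context sys begin

lemma sfs: "k \<le> N \<Longrightarrow> sigma_finite_subalgebra M (info_e M x tau \<delta> u k)"
proof -
  assume kN: "k \<le> N"
  interpret prob_space M by (rule prob)
  have "finite_measure_subalgebra M (info_e M x tau \<delta> u k)"
    unfolding finite_measure_subalgebra_def finite_measure_subalgebra_axioms_def
    using finite_measure_axioms subalg_e[OF kN] by blast
  then show ?thesis by (rule finite_measure_subalgebra_is_sigma_finite)
qed

lemma ce_eq:
  assumes kN: "k \<le> N"
  shows "AE \<omega> in M. real_cond_exp M (info_e M x tau \<delta> u k) (\<lambda>\<omega>'. x k \<omega>' $ i) \<omega> = Fm k \<omega> $ i"
proof -
  let ?F = "info_e M x tau \<delta> u k"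
  interpret sigma_finite_subalgebra M ?F by (rule sfs[OF kN])
  interpret P: prob_space M by (rule prob)
  have fin: "finite_measure M" by (rule P.finite_measure_axioms)
  have ix: "integrable M (\<lambda>\<omega>. x k \<omega> $ i)" by (rule L2_int[OF fin x_L2[OF kN]])
  have iF: "integrable M (\<lambda>\<omega>. Fm k \<omega> $ i)" by (rule L2_int[OF fin Fm_L2[OF kN]])
  have in_: "integrable M (noise k i)" by (rule L2_int[OF fin noise_L2[OF kN]])
  show ?thesis
  proof (rule real_cond_exp_charact[OF _ ix iF nth_meas[OF Fm_meas[OF kN]]])
    fix Q assume Q: "Q \<in> sets ?F"
    have QM: "Q \<in> sets M" using Q sub_e_M[OF kN] by blast
    have i1: "integrable M (\<lambda>\<omega>. indicator Q \<omega> * Fm k \<omega> $ i)"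
      using integrable_real_mult_indicator[OF QM iF] by (simp add: mult.commute)
    have tint: "integrable M (\<lambda>\<omega>. indicator Q \<omega> * (indicator (Et k t) \<omega> * w (k - t) \<omega> $ l))"
      and tzero: "(\<integral>\<omega>. indicator Q \<omega> * (indicator (Et k t) \<omega> * w (k - t) \<omega> $ l) \<partial>M) = 0"
      if "t \<in> {1..k}" for t l
      using key_orth[OF kN _ _ Q, of t l] that unfolding Et_def by auto
    have nexp: "(\<lambda>\<omega>. indicator Q \<omega> * noise k i \<omega>) =
      (\<lambda>\<omega>. \<Sum>t\<in>{1..k}. \<Sum>l\<in>UNIV. matpow A (t - 1) $ i $ l * (indicator Q \<omega> * (indicator (Et k t) \<omega> * w (k - t) \<omega> $ l)))"
      unfolding noise_def by (rule ext) (simp only: sum_distrib_left mult.left_commute)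
    have i2: "integrable M (\<lambda>\<omega>. indicator Q \<omega> * noise k i \<omega>)"
      unfolding nexp by (intro Bochner_Integration.integrable_sum integrable_mult_right tint)
    have z2: "(\<integral>\<omega>. indicator Q \<omega> * noise k i \<omega> \<partial>M) = 0"
      unfolding nexp
      by (subst Bochner_Integration.integral_sum, intro Bochner_Integration.integrable_sum integrable_mult_right tint,
          simp, rule sum.neutral, intro ballI,
          subst Bochner_Integration.integral_sum, intro integrable_mult_right tint, simp,
          simp add: tzero)
    have "(\<integral>\<omega>. indicator Q \<omega> * x k \<omega> $ i \<partial>M) = (\<integral>\<omega>. indicator Q \<omega> * Fm k \<omega> $ i + indicator Q \<omega> * noise k i \<omega> \<partial>M)"
      by (rule Bochner_Integration.integral_cong[OF refl]) (simp add: decomp[OF kN] distrib_left)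
    also have "\<dots> = (\<integral>\<omega>. indicator Q \<omega> * Fm k \<omega> $ i \<partial>M)"
      using i1 i2 z2 by simp
    finally show "(\<integral>\<omega>\<in>Q. x k \<omega> $ i \<partial>M) = (\<integral>\<omega>\<in>Q. Fm k \<omega> $ i \<partial>M)"
      unfolding set_lebesgue_integral_def by simp
  qed
qed

lemma result:
  assumes kN: "k \<le> N"
  shows "let xhat = (\<lambda>\<omega>. \<chi> i. real_cond_exp M (info_e M x tau \<delta> u k) (\<lambda>\<omega>'. x k \<omega>' $ i) \<omega>);
          z = (\<lambda>\<omega>. aoi_e (\<lambda>s. tau s \<omega>) k)
      in xhat \<in> borel_measurable (info_e M x tau \<delta> u k)
       \<and> (\<forall>g \<in> borel_measurable (info_e M x tau \<delta> u k).
            (\<integral>\<^sup>+\<omega>. ennreal ((norm (x k \<omega> - xhat \<omega>))\<^sup>2) \<partial>M)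
              \<le> (\<integral>\<^sup>+\<omega>. ennreal ((norm (x k \<omega> - g \<omega>))\<^sup>2) \<partial>M))
       \<and> (AE \<omega> in M. xhat \<omega> = matpow A (z \<omega>) *v x (k - z \<omega>) \<omega>
              + (\<Sum>t\<in>{1..z \<omega>}. matpow A (t - 1) *v (B *v u (k - t) \<omega>)))"
proof -
  let ?F = "info_e M x tau \<delta> u k"
  define ce where "ce = (\<lambda>i. real_cond_exp M ?F (\<lambda>\<omega>'. x k \<omega>' $ i))"
  define xhat where "xhat = (\<lambda>\<omega>. \<chi> i. ce i \<omega>)"
  interpret sigma_finite_subalgebra M ?F by (rule sfs[OF kN])
  have m1: "xhat \<in> borel_measurable ?F" unfolding xhat_def ce_def by (rule vec_meas) simp
  have m2: "\<forall>g \<in> borel_measurable ?F.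
            (\<integral>\<^sup>+\<omega>. ennreal ((norm (x k \<omega> - xhat \<omega>))\<^sup>2) \<partial>M) \<le> (\<integral>\<^sup>+\<omega>. ennreal ((norm (x k \<omega> - g \<omega>))\<^sup>2) \<partial>M)"
  proof
    fix g :: "'a \<Rightarrow> real^'n" assume g: "g \<in> borel_measurable ?F"
    have gM: "g \<in> borel_measurable M" by (rule measurable_from_subalg[OF subalg g])
    have xkM: "x k \<in> borel_measurable M" by (rule x_M[OF kN])
    have eq: "(\<integral>\<^sup>+\<omega>. ennreal ((norm (x k \<omega> - h \<omega>))\<^sup>2) \<partial>M) = (\<Sum>i\<in>UNIV. \<integral>\<^sup>+\<omega>. ennreal ((x k \<omega> $ i - h \<omega> $ i)^2) \<partial>M)"
      if hM: "h \<in> borel_measurable M" for h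
    proof -
      have "(\<integral>\<^sup>+\<omega>. ennreal ((norm (x k \<omega> - h \<omega>))\<^sup>2) \<partial>M) = (\<integral>\<^sup>+\<omega>. (\<Sum>i\<in>UNIV. ennreal ((x k \<omega> $ i - h \<omega> $ i)^2)) \<partial>M)"
        unfolding normsq by (simp add: sum_ennreal)
      also have "\<dots> = (\<Sum>i\<in>UNIV. \<integral>\<^sup>+\<omega>. ennreal ((x k \<omega> $ i - h \<omega> $ i)^2) \<partial>M)"
        by (rule nn_integral_sum) (use nth_meas[OF xkM] nth_meas[OF hM] in measurable)
      finally show ?thesis .
    qed
    have xhM: "xhat \<in> borel_measurable M" by (rule measurable_from_subalg[OF subalg m1])
    have "(\<integral>\<^sup>+\<omega>. ennreal ((norm (x k \<omega> - xhat \<omega>))\<^sup>2) \<partial>M) = (\<Sum>i\<in>UNIV. \<integral>\<^sup>+\<omega>. ennreal ((x k \<omega> $ i - ce i \<omega>)^2) \<partial>M)"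
      unfolding eq[OF xhM] unfolding xhat_def by simp
    also have "\<dots> \<le> (\<Sum>i\<in>UNIV. \<integral>\<^sup>+\<omega>. ennreal ((x k \<omega> $ i - g \<omega> $ i)^2) \<partial>M)"
    proof (rule sum_mono)
      fix i
      show "(\<integral>\<^sup>+\<omega>. ennreal ((x k \<omega> $ i - ce i \<omega>)^2) \<partial>M) \<le> (\<integral>\<^sup>+\<omega>. ennreal ((x k \<omega> $ i - g \<omega> $ i)^2) \<partial>M)"
        unfolding ce_def
        by (rule mmse_comp[OF sfs[OF kN] x_L2[OF kN] Fm_L2[OF kN] nth_meas[OF Fm_meas[OF kN]] ce_eq[OF kN] nth_meas[OF g]])
    qed
    also have "\<dots> = (\<integral>\<^sup>+\<omega>. ennreal ((norm (x k \<omega> - g \<omega>))\<^sup>2) \<partial>M)" by (rule eq[OF gM, symmetric])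
    finally show "(\<integral>\<^sup>+\<omega>. ennreal ((norm (x k \<omega> - xhat \<omega>))\<^sup>2) \<partial>M) \<le> (\<integral>\<^sup>+\<omega>. ennreal ((norm (x k \<omega> - g \<omega>))\<^sup>2) \<partial>M)" .
  qed
  have "AE \<omega> in M. \<forall>i\<in>UNIV. ce i \<omega> = Fm k \<omega> $ i"
    by (rule AE_finite_allI) (simp_all add: ce_def ce_eq[OF kN])
  then have m3: "AE \<omega> in M. xhat \<omega> = matpow A (aoi_e (\<lambda>s. tau s \<omega>) k) *v x (k - aoi_e (\<lambda>s. tau s \<omega>) k) \<omega>
              + (\<Sum>t\<in>{1..aoi_e (\<lambda>s. tau s \<omega>) k}. matpow A (t - 1) *v (B *v u (k - t) \<omega>))"
    by eventually_elim (simp add: xhat_def vec_eq_iff Fm_def zeta_def)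
  show ?thesis unfolding Let_def using m1 m2 m3 unfolding xhat_def ce_def by blast
qed

end

theorem lemma1:
  fixes M :: "'a measure" and N :: nat
    and A :: "real^'n^'n" and B :: "real^'m^'n"
    and W M0 :: "real^'n^'n" and m0 :: "real^'n"
    and x :: "nat \<Rightarrow> 'a \<Rightarrow> real^'n" and w :: "nat \<Rightarrow> 'a \<Rightarrow> real^'n"
    and u :: "nat \<Rightarrow> 'a \<Rightarrow> real^'m" and tau :: "nat \<Rightarrow> 'a \<Rightarrow> nat"
    and \<delta> :: "nat \<Rightarrow> 'a \<Rightarrow> bool" and v :: "nat \<Rightarrow> 'a \<Rightarrow> real"
  assumes prob: "prob_space M"
    and x0_gauss: "gaussian_vec M (x 0) m0 M0"
    and w_gauss: "\<And>k. k \<le> N \<Longrightarrow> gaussian_vec M (w k) 0 W"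
    and W_pd: "pd_matrix W"
    and dyn: "\<And>k \<omega>. k < N \<Longrightarrow> \<omega> \<in> space M \<Longrightarrow> x (Suc k) \<omega> = A *v x k \<omega> + B *v u k \<omega> + w k \<omega>"
    and tau_meas: "\<And>k. k \<le> N \<Longrightarrow> tau k \<in> measurable M (count_space UNIV)"
    and tau0: "\<And>\<omega>. \<omega> \<in> space M \<Longrightarrow> tau 0 \<omega> = 0"
    and v_meas: "\<And>k. k \<le> N \<Longrightarrow> v k \<in> borel_measurable M"
    and indep: "prob_space.indep_sets M
        (\<lambda>i. case i of SX0 \<Rightarrow> gen_sets M (x 0) borel
                     | SW k \<Rightarrow> gen_sets M (w k) borel
                     | STau k \<Rightarrow> gen_sets M (tau k) (count_space UNIV)
                     | SV k \<Rightarrow> gen_sets M (v k) borel)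
        ({SX0} \<union> SW ` {..N} \<union> STau ` {..N} \<union> SV ` {..N})"
    and ctrl: "\<And>k. k \<le> N \<Longrightarrow> u k \<in> borel_measurable (info_c M x tau \<delta> u k)"
    and ctrl_L2: "\<And>k. k \<le> N \<Longrightarrow> integrable M (\<lambda>\<omega>. (norm (u k \<omega>))\<^sup>2)"
    and trig: "\<And>k. k \<le> N \<Longrightarrow> \<delta> k \<in> measurable
        (sigma (space M) (sets (info_e M x tau \<delta> u k) \<union> gen_sets M (v k) borel)) (count_space UNIV)"
  shows "\<forall>k \<le> N.
     (let xhat = (\<lambda>\<omega>. \<chi> i. real_cond_exp M (info_e M x tau \<delta> u k) (\<lambda>\<omega>'. x k \<omega>' $ i) \<omega>);
          z = (\<lambda>\<omega>. aoi_e (\<lambda>s. tau s \<omega>) k)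
      in xhat \<in> borel_measurable (info_e M x tau \<delta> u k)
       \<and> (\<forall>g \<in> borel_measurable (info_e M x tau \<delta> u k).
            (\<integral>\<^sup>+\<omega>. ennreal ((norm (x k \<omega> - xhat \<omega>))\<^sup>2) \<partial>M)
              \<le> (\<integral>\<^sup>+\<omega>. ennreal ((norm (x k \<omega> - g \<omega>))\<^sup>2) \<partial>M))
       \<and> (AE \<omega> in M. xhat \<omega> = matpow A (z \<omega>) *v x (k - z \<omega>) \<omega>
              + (\<Sum>t\<in>{1..z \<omega>}. matpow A (t - 1) *v (B *v u (k - t) \<omega>))))"
  proof -
  interpret sys M N A B W M0 m0 x w u tau \<delta> v by (rule sys.intro[OF assms])
  show ?thesis using result by blast
qed

end
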